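(* Let $\Delta\in\mathfrak{A}^N_0$ with $n^\Delta_{-\lambda}=n^\Delta_\lambda$ for all $\lambda\in k^*$, and let $C,C'$ be two distinct $SO_Q$-conjugacy classes contained in $R_\Delta$. If $N\equiv2\pmod4$ then $C'=-C$. If $N\equiv0\pmod4$ then $-C=C$ and $-C'=C'$.
   Context: $k$ is an algebraically closed field of odd characteristic. $V$ is a $k$-vector space of even dimension $N\ge2$ with nondegenerate quadratic form $Q$. For semisimple $s\in SO_Q$, $V^s_\lambda$ is its $\lambda$-eigenspace and $\Delta_s=\prod_{\lambda\in k^*}(X-\lambda)^{\dim V^s_\lambda}$. For monic $\Delta\in k[X]$ with $\Delta(0)\neq0$, $n^\Delta_\lambda$ is the multiplicity of $\lambda$ as a root. $\mathfrak{A}^N_0$ is the set of such $\Delta$ of degree $N$ with $n^\Delta_{\lambda^{-1}}=n^\Delta_\lambda$ for all $\lambda$ and $n^\Delta_1=n^\Delta_{-1}=0$. $R_\Delta=\{s\in SO_Q \text{ semisimple}:\Delta_s=\Delta\}$, and $-C=\{-c:c\in C\}$. *)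

theory Defs
  imports "Jordan_Normal_Form.Jordan_Normal_Form_Uniqueness"
          "HOL-Computational_Algebra.Polynomial"
begin

text \<open>The space V is modelled as k^N (vectors in carrier_vec N). A quadratic form on k^N
  is given by a matrix A via Q(v) = v . (A v).\<close>

definition qform :: "'k::field mat \<Rightarrow> 'k vec \<Rightarrow> 'k" where
  "qform A v = v \<bullet> (A *\<^sub>v v)"

definition polar_form :: "'k::field mat \<Rightarrow> 'k vec \<Rightarrow> 'k vec \<Rightarrow> 'k" where
  "polar_form A x y = qform A (x + y) - qform A x - qform A y"

definition nondegenerate_qf :: "nat \<Rightarrow> 'k::field mat \<Rightarrow> bool" where
  "nondegenerate_qf N A \<longleftrightarrow> A \<in> carrier_mat N N \<and>
     (\<forall>x\<in>carrier_vec N. (\<forall>y\<in>carrier_vec N. polar_form A x y = 0) \<longrightarrow> x = 0\<^sub>v N)"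

definition SO_Q :: "nat \<Rightarrow> 'k::field mat \<Rightarrow> 'k mat set" where
  "SO_Q N A = {g \<in> carrier_mat N N. det g = 1 \<and>
                 (\<forall>v\<in>carrier_vec N. qform A (g *\<^sub>v v) = qform A v)}"

text \<open>semisimple = diagonalizable (k algebraically closed)\<close>
definition semisimple :: "'k::field mat \<Rightarrow> bool" where
  "semisimple s \<longleftrightarrow> (\<exists>D. similar_mat s D \<and> diagonal_mat D)"

definition eigsp_dim :: "'k::field mat \<Rightarrow> 'k \<Rightarrow> nat" where
  "eigsp_dim s l = dim_gen_eigenspace s l 1"

definition Delta_of :: "'k::field mat \<Rightarrow> 'k poly" where
  "Delta_of s = (\<Prod>l\<in>{l. l \<noteq> 0 \<and> eigsp_dim s l > 0}. [:-l, 1:] ^ eigsp_dim s l)"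

definition mult_root :: "'k::field poly \<Rightarrow> 'k \<Rightarrow> nat" where
  "mult_root \<Delta> l = Polynomial.order l \<Delta>"

definition frakA0 :: "nat \<Rightarrow> 'k::field poly set" where
  "frakA0 N = {\<Delta>. monic \<Delta> \<and> poly \<Delta> 0 \<noteq> 0 \<and> degree \<Delta> = N \<and>
      (\<forall>l. l \<noteq> 0 \<longrightarrow> mult_root \<Delta> (inverse l) = mult_root \<Delta> l) \<and>
      mult_root \<Delta> 1 = 0 \<and> mult_root \<Delta> (-1) = 0}"

definition R_Delta :: "nat \<Rightarrow> 'k::field mat \<Rightarrow> 'k poly \<Rightarrow> 'k mat set" where
  "R_Delta N A \<Delta> = {s \<in> SO_Q N A. semisimple s \<and> Delta_of s = \<Delta>}"

definition conj_class :: "nat \<Rightarrow> 'k::field mat \<Rightarrow> 'k mat \<Rightarrow> 'k mat set" where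
  "conj_class N A s = {g * s * h | g h. g \<in> SO_Q N A \<and> h \<in> carrier_mat N N \<and> g * h = 1\<^sub>m N \<and> h * g = 1\<^sub>m N}"

definition is_conj_class :: "nat \<Rightarrow> 'k::field mat \<Rightarrow> 'k mat set \<Rightarrow> bool" where
  "is_conj_class N A C \<longleftrightarrow> (\<exists>s\<in>SO_Q N A. C = conj_class N A s)"

end

theory Submission
  imports Defs
begin

definition bf :: "'k::field mat \<Rightarrow> 'k vec \<Rightarrow> 'k vec \<Rightarrow> 'k" where
  "bf B x y = x \<bullet> (B *\<^sub>v y)"

lemma polar_bf:
  assumes A: "A \<in> carrier_mat N N" and x: "x \<in> carrier_vec N" and y: "y \<in> carrier_vec N"
  shows "polar_form A x y = bf (A + A\<^sup>T) x y"
proof -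
  have AT: "A\<^sup>T \<in> carrier_mat N N" using A by simp
  have Ax: "A *\<^sub>v x \<in> carrier_vec N" "A *\<^sub>v y \<in> carrier_vec N" using A x y by auto
  have e1: "qform A (x + y) = x \<bullet> (A *\<^sub>v x) + x \<bullet> (A *\<^sub>v y) + (y \<bullet> (A *\<^sub>v x) + y \<bullet> (A *\<^sub>v y))"
    unfolding qform_def using A x y Ax
    by (simp add: mult_add_distrib_mat_vec add_scalar_prod_distrib scalar_prod_add_distrib)
  have e2: "y \<bullet> (A *\<^sub>v x) = x \<bullet> (A\<^sup>T *\<^sub>v y)"
    using transpose_vec_mult_scalar[OF A x y] comm_scalar_prod[of x N "A\<^sup>T *\<^sub>v y"] AT x y by auto
  have e3: "bf (A + A\<^sup>T) x y = x \<bullet> (A *\<^sub>v y) + x \<bullet> (A\<^sup>T *\<^sub>v y)"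
    unfolding bf_def using A AT x y
    by (simp add: add_mult_distrib_mat_vec[OF A AT y] scalar_prod_add_distrib[of x N])
  show ?thesis unfolding polar_form_def e1 e3 using e2 by (simp add: qform_def)
qed

lemma bf_sym:
  assumes B: "B \<in> carrier_mat N N" and BT: "B\<^sup>T = B" and x: "x \<in> carrier_vec N" and y: "y \<in> carrier_vec N"
  shows "bf B x y = bf B y x"
  unfolding bf_def
  using transpose_vec_mult_scalar[OF B y x] comm_scalar_prod[of x N "B *\<^sub>v y"] comm_scalar_prod[of y N "B *\<^sub>v x"] B x y BT by auto

lemma two_ne_zero_char:
  assumes "odd CHAR('k::field)" shows "(2::'k) \<noteq> 0"
proof
  assume "(2::'k) = 0"
  hence "(of_nat 2::'k) = 0" by simp
  hence "CHAR('k) dvd 2" by (simp only: of_nat_eq_0_iff_char_dvd)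
  with assms have "CHAR('k) = 1"
    by (metis dvd_antisym even_numeral nat_dvd_1_iff_1 prime_nat_iff two_is_prime_nat)
  hence "(of_nat 1 :: 'k) = 0" by (simp only: of_nat_eq_0_iff_char_dvd) simp
  thus False by simp
qed


lemma jordan_matrix_diag_list:
  "jordan_matrix (map (\<lambda>x. (1::nat, x)) ds) =
     mat (length ds) (length ds) (\<lambda>(i,j). if i = j then ds ! i else (0::'a::{zero,one}))"
proof (induct ds)
  case Nil
  show ?case unfolding jordan_matrix_def by (intro eq_matI, auto)
next
  case (Cons x ds)
  have jm: "jordan_matrix (map (\<lambda>x. (1::nat, x)) (x # ds)) =
    four_block_mat (jordan_block 1 x) (0\<^sub>m 1 (length ds)) (0\<^sub>m (length ds) 1)
      (jordan_matrix (map (\<lambda>x. (1::nat, x)) ds))"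
  proof -
    have d: "dim_row (jordan_matrix (map (\<lambda>x. (1::nat, x)) ds)) = length ds"
      "dim_col (jordan_matrix (map (\<lambda>x. (1::nat, x)) ds)) = length ds" using Cons by simp_all
    show ?thesis using d unfolding jordan_matrix_def by (simp add: Let_def)
  qed
  show ?case unfolding jm Cons
    by (intro eq_matI, auto simp: four_block_mat_def nth_Cons')
qed

lemma diag_as_jordan:
  assumes D: "D \<in> carrier_mat N N" and dg: "diagonal_mat D"
  shows "D = jordan_matrix (map (\<lambda>x. (1::nat, x)) (map (\<lambda>j. D $$ (j,j)) [0..<N]))"
  unfolding jordan_matrix_diag_list using D dg unfolding diagonal_mat_def
  by (intro eq_matI, auto)

lemma dim_eig_diag:
  assumes D: "D \<in> carrier_mat N N" and dg: "diagonal_mat D"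
  shows "dim_gen_eigenspace D mu 1 = card {j. j < N \<and> D $$ (j,j) = mu}"
proof -
  have "dim_gen_eigenspace D mu 1 =
    (\<Sum>n\<leftarrow>map fst [(n, e)\<leftarrow>map (\<lambda>x. (1::nat, x)) (map (\<lambda>j. D $$ (j,j)) [0..<N]) . e = mu]. min 1 n)"
    by (subst diag_as_jordan[OF D dg], rule dim_gen_eigenspace_jordan_matrix)
  also have "\<dots> = length (filter (\<lambda>j. D $$ (j,j) = mu) [0..<N])"
    by (induct N, auto)
  also have "\<dots> = card {j. j < N \<and> D $$ (j,j) = mu}"
    by (simp add: length_filter_conv_card, rule arg_cong[of _ _ card], auto)
  finally show ?thesis .
qed

lemma eigsp_dim_diag_similar:
  assumes "similar_mat s D" and D: "D \<in> carrier_mat N N" and dg: "diagonal_mat D"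
  shows "eigsp_dim s mu = card {j. j < N \<and> D $$ (j,j) = mu}"
  unfolding eigsp_dim_def dim_gen_eigenspace_similar[OF assms(1)] using dim_eig_diag[OF D dg] .


lemma order_prod_lin:
  assumes "finite L"
  shows "Polynomial.order mu (\<Prod>l\<in>L. [:-l, 1:] ^ (e l)) = (if mu \<in> L then e mu else 0)"
  using assms
proof (induct L rule: finite_induct)
  case empty
  show ?case by (simp add: order_0I)
next
  case (insert x F)
  have nz1: "[:-x, 1:] ^ e x \<noteq> 0" by simp
  have nz2: "(\<Prod>l\<in>F. [:-l, 1:] ^ (e l)) \<noteq> 0" by (simp add: prod_zero_iff insert)
  have o1: "Polynomial.order mu ([:-x, 1:] ^ e x) = (if mu = x then e x else 0)"
  proof (cases "mu = x")
    case True thus ?thesis by (simp add: order_power_n_n)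
  next
    case False
    have "poly ([:-x, 1:] ^ e x) mu \<noteq> 0" using False by (simp add: poly_power)
    thus ?thesis using False by (simp add: order_0I)
  qed
  show ?case
    unfolding prod.insert[OF insert(1,2)] order_mult[OF no_zero_divisors[OF nz1 nz2]]
    using insert o1 by auto
qed

lemma Delta_of_mult_root:
  assumes "degree (Delta_of s) \<noteq> 0" and "mu \<noteq> 0"
  shows "mult_root (Delta_of s) mu = eigsp_dim s mu"
proof -
  let ?L = "{l. l \<noteq> 0 \<and> eigsp_dim s l > 0}"
  have fin: "finite ?L"
  proof (rule ccontr)
    assume "infinite ?L"
    hence "Delta_of s = 1" unfolding Delta_of_def by simp
    with assms show False by simp
  qed
  show ?thesis unfolding mult_root_def Delta_of_def order_prod_lin[OF fin] using assms(2) by auto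
qed


lemma bf_expand:
  assumes B: "B \<in> carrier_mat N N" and y: "y \<in> carrier_vec N" and x: "x \<in> carrier_vec N"
  shows "bf B x y = (\<Sum>a<N. x $ a * (B *\<^sub>v y) $ a)"
  unfolding bf_def scalar_prod_def using B y by (simp add: atLeast0LessThan)

lemma mv_expand:
  fixes s :: "'k::field mat"
  assumes s: "s \<in> carrier_mat N N" and x: "x \<in> carrier_vec N" and a: "a < N"
  shows "(s *\<^sub>v x) $ a = (\<Sum>b<N. s $$ (a,b) * x $ b)"
  using s x a by (simp add: scalar_prod_def atLeast0LessThan)

lemma bf_pr_left:
  assumes B: "B \<in> carrier_mat N N" and y: "y \<in> carrier_vec N" and v: "v \<in> carrier_vec N"
    and ef: "\<And>i. i < k \<Longrightarrow> e i \<in> carrier_vec N \<and> f i \<in> carrier_vec N"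
  shows "bf B (vec N (\<lambda>a. v$a - (\<Sum>i<k. c i * e i $ a + d i * f i $ a))) y
       = bf B v y - (\<Sum>i<k. c i * bf B (e i) y + d i * bf B (f i) y)"
proof -
  have "bf B (vec N (\<lambda>a. v$a - (\<Sum>i<k. c i * e i $ a + d i * f i $ a))) y
     = (\<Sum>a<N. (v$a - (\<Sum>i<k. c i * e i $ a + d i * f i $ a)) * (B *\<^sub>v y) $ a)"
    by (subst bf_expand[OF B y], auto)
  also have "\<dots> = (\<Sum>a<N. v$a * (B *\<^sub>v y) $ a) - (\<Sum>i<k. c i * (\<Sum>a<N. e i $ a * (B *\<^sub>v y) $ a)
       + d i * (\<Sum>a<N. f i $ a * (B *\<^sub>v y) $ a))"
    by (simp add: left_diff_distrib sum_subtractf sum_distrib_left sum_distrib_right sum.distrib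
        distrib_right mult.assoc sum.swap[of _ "{..<k}"])
  also have "\<dots> = bf B v y - (\<Sum>i<k. c i * bf B (e i) y + d i * bf B (f i) y)"
    using bf_expand[OF B y] v ef by (intro arg_cong2[where f = "(-)"] sum.cong, auto)
  finally show ?thesis .
qed

lemma mv_pr:
  fixes s :: "'k::field mat"
  assumes s: "s \<in> carrier_mat N N" and v: "v \<in> carrier_vec N"
    and ef: "\<And>i. i < k \<Longrightarrow> e i \<in> carrier_vec N \<and> f i \<in> carrier_vec N"
  shows "s *\<^sub>v (vec N (\<lambda>a. v$a - (\<Sum>i<k. c i * e i $ a + d i * f i $ a)))
       = vec N (\<lambda>a. (s *\<^sub>v v)$a - (\<Sum>i<k. c i * (s *\<^sub>v e i) $ a + d i * (s *\<^sub>v f i) $ a))"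
proof (rule eq_vecI)
  fix a assume a: "a < dim_vec (vec N (\<lambda>a. (s *\<^sub>v v)$a - (\<Sum>i<k. c i * (s *\<^sub>v e i) $ a + d i * (s *\<^sub>v f i) $ a)))"
  hence a: "a < N" by simp
  have "(s *\<^sub>v (vec N (\<lambda>a. v$a - (\<Sum>i<k. c i * e i $ a + d i * f i $ a)))) $ a
     = (\<Sum>b<N. s $$ (a,b) * (v$b - (\<Sum>i<k. c i * e i $ b + d i * f i $ b)))"
    by (subst mv_expand[OF s _ a], auto)
  also have "\<dots> = (\<Sum>b<N. s $$ (a,b) * v $ b) - (\<Sum>i<k. c i * (\<Sum>b<N. s $$ (a,b) * e i $ b)
       + d i * (\<Sum>b<N. s $$ (a,b) * f i $ b))"
  proof -
    have "(\<Sum>b<N. s $$ (a,b) * (v$b - (\<Sum>i<k. c i * e i $ b + d i * f i $ b)))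
      = (\<Sum>b<N. s $$ (a,b) * v$b - (\<Sum>i<k. c i * (s $$ (a,b) * e i $ b) + d i * (s $$ (a,b) * f i $ b)))"
    proof (intro sum.cong refl)
      fix x
      have "s $$ (a,x) * (\<Sum>i<k. c i * e i $ x + d i * f i $ x) = (\<Sum>i<k. c i * (s $$ (a,x) * e i $ x) + d i * (s $$ (a,x) * f i $ x))"
        by (subst sum_distrib_left, rule sum.cong, auto simp: algebra_simps)
      thus "s $$ (a,x) * (v$x - (\<Sum>i<k. c i * e i $ x + d i * f i $ x)) = s $$ (a,x) * v$x - (\<Sum>i<k. c i * (s $$ (a,x) * e i $ x) + d i * (s $$ (a,x) * f i $ x))"
        by (simp add: right_diff_distrib)
    qed
    also have "\<dots> = (\<Sum>b<N. s $$ (a,b) * v $ b) - (\<Sum>i<k. c i * (\<Sum>b<N. s $$ (a,b) * e i $ b)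
       + d i * (\<Sum>b<N. s $$ (a,b) * f i $ b))"
      by (simp add: sum_subtractf sum_distrib_left sum.distrib sum.swap[of _ "{..<k}"])
    finally show ?thesis .
  qed
  also have "\<dots> = (s *\<^sub>v v)$a - (\<Sum>i<k. c i * (s *\<^sub>v e i) $ a + d i * (s *\<^sub>v f i) $ a)"
    using mv_expand[OF s _ a] v ef by (intro arg_cong2[where f = "(-)"] sum.cong, auto)
  finally show "(s *\<^sub>v (vec N (\<lambda>a. v$a - (\<Sum>i<k. c i * e i $ a + d i * f i $ a)))) $ a =
    vec N (\<lambda>a. (s *\<^sub>v v)$a - (\<Sum>i<k. c i * (s *\<^sub>v e i) $ a + d i * (s *\<^sub>v f i) $ a)) $ a"
    using a by simp
qed (insert s, auto)

lemma bf_lc_right: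
  assumes B: "B \<in> carrier_mat N N" and BT: "B\<^sup>T = B" and x: "x \<in> carrier_vec N"
    and w: "\<And>j. j < n \<Longrightarrow> w j \<in> carrier_vec N"
  shows "bf B x (vec N (\<lambda>a. \<Sum>j<n. c j * w j $ a)) = (\<Sum>j<n. c j * bf B x (w j))"
proof -
  have "bf B x (vec N (\<lambda>a. \<Sum>j<n. c j * w j $ a)) = bf B (vec N (\<lambda>a. \<Sum>j<n. c j * w j $ a)) x"
    by (rule bf_sym[OF B BT], auto simp: x)
  also have "\<dots> = (\<Sum>a<N. (\<Sum>j<n. c j * w j $ a) * (B *\<^sub>v x) $ a)"
    by (subst bf_expand[OF B x], auto)
  also have "\<dots> = (\<Sum>j<n. c j * (\<Sum>a<N. w j $ a * (B *\<^sub>v x) $ a))"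
    by (simp add: sum_distrib_left sum_distrib_right mult.assoc sum.swap[of _ "{..<n}"])
  also have "\<dots> = (\<Sum>j<n. c j * bf B x (w j))"
    using bf_expand[OF B x] w bf_sym[OF B BT x] by (intro sum.cong, auto)
  finally show ?thesis .
qed


lemma bf_smult_left:
  assumes B: "B \<in> carrier_mat N N" and x: "x \<in> carrier_vec N" and y: "y \<in> carrier_vec N"
  shows "bf B (c \<cdot>\<^sub>v x) y = c * bf B x y"
  unfolding bf_def using B x y by (simp add: smult_scalar_prod_distrib[of x N])

lemma bf_smult_right:
  assumes B: "B \<in> carrier_mat N N" and x: "x \<in> carrier_vec N" and y: "y \<in> carrier_vec N"
  shows "bf B x (c \<cdot>\<^sub>v y) = c * bf B x y"
  unfolding bf_def using B x y by (simp add: mult_mat_vec[OF B y] scalar_prod_smult_distrib[of x N])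

locale hsetup =
  fixes N m :: nat and B s Q Qi D0 :: "'k::field mat" and S :: "'k set"
  assumes Nm: "N = 2*m"
    and B: "B \<in> carrier_mat N N" and BT: "B\<^sup>T = B"
    and s: "s \<in> carrier_mat N N" and Q: "Q \<in> carrier_mat N N" and Qi: "Qi \<in> carrier_mat N N"
    and D0: "D0 \<in> carrier_mat N N"
    and QQi: "Q * Qi = 1\<^sub>m N" and QiQ: "Qi * Q = 1\<^sub>m N"
    and sQ: "s * Q = Q * D0"
    and dg: "diagonal_mat D0"
    and inv: "\<And>x y. x \<in> carrier_vec N \<Longrightarrow> y \<in> carrier_vec N \<Longrightarrow> bf B (s *\<^sub>v x) (s *\<^sub>v y) = bf B x y"
    and nondeg: "\<And>x. x \<in> carrier_vec N \<Longrightarrow> (\<And>y. y \<in> carrier_vec N \<Longrightarrow> bf B x y = 0) \<Longrightarrow> x = 0\<^sub>v N"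
    and d0: "\<And>j. j < N \<Longrightarrow> D0$$(j,j) \<noteq> 0 \<and> D0$$(j,j) \<noteq> 1 \<and> D0$$(j,j) \<noteq> -1"
    and Sprop: "\<And>mu. mu \<noteq> 0 \<Longrightarrow> mu \<noteq> 1 \<Longrightarrow> mu \<noteq> -1 \<Longrightarrow> (mu \<in> S \<longleftrightarrow> inverse mu \<notin> S)"
begin

definition q :: "nat \<Rightarrow> 'k vec" where "q j = col Q j"

definition pr :: "nat \<Rightarrow> (nat \<Rightarrow> 'k vec) \<Rightarrow> (nat \<Rightarrow> 'k vec) \<Rightarrow> 'k vec \<Rightarrow> 'k vec" where
  "pr k e f v = vec N (\<lambda>a. v$a - (\<Sum>i<k. bf B v (f i) * e i $ a + bf B v (e i) * f i $ a))"

definition hdat :: "nat \<Rightarrow> (nat \<Rightarrow> 'k vec) \<Rightarrow> (nat \<Rightarrow> 'k vec) \<Rightarrow> (nat \<Rightarrow> 'k) \<Rightarrow> bool" where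
  "hdat k e f lam \<longleftrightarrow> (\<forall>i<k. e i \<in> carrier_vec N \<and> f i \<in> carrier_vec N \<and> s *\<^sub>v e i = lam i \<cdot>\<^sub>v e i
      \<and> s *\<^sub>v f i = inverse (lam i) \<cdot>\<^sub>v f i \<and> lam i \<in> S \<and> lam i \<noteq> 0) \<and>
    (\<forall>i<k. \<forall>j<k. bf B (e i) (e j) = 0 \<and> bf B (f i) (f j) = 0 \<and> bf B (e i) (f j) = (if i = j then 1 else 0))"

lemma q_carrier: "j < N \<Longrightarrow> q j \<in> carrier_vec N"
  unfolding q_def using Q by auto

lemma q_eig: assumes j: "j < N" shows "s *\<^sub>v q j = D0$$(j,j) \<cdot>\<^sub>v q j"
proof (rule eq_vecI)
  fix a assume "a < dim_vec (D0$$(j,j) \<cdot>\<^sub>v q j)"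
  hence a: "a < N" unfolding q_def using Q by simp
  have "(s *\<^sub>v q j) $ a = (s * Q) $$ (a,j)" unfolding q_def using s Q a j by simp
  also have "\<dots> = (Q * D0) $$ (a,j)" by (simp add: sQ)
  also have "\<dots> = (\<Sum>b\<in>{0..<N}. Q $$ (a,b) * D0 $$ (b,j))"
    using Q D0 a j by (simp add: scalar_prod_def)
  also have "\<dots> = (\<Sum>b\<in>{0..<N}. if b = j then Q $$ (a,j) * D0 $$ (j,j) else 0)"
    using dg D0 j unfolding diagonal_mat_def by (intro sum.cong, auto)
  also have "\<dots> = Q $$ (a,j) * D0 $$ (j,j)" using j by simp
  finally show "(s *\<^sub>v q j) $ a = (D0$$(j,j) \<cdot>\<^sub>v q j) $ a"
    unfolding q_def using Q a j by simp
qed (insert s Q, auto simp: q_def)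

lemma q_span: assumes v: "v \<in> carrier_vec N"
  shows "v = vec N (\<lambda>a. \<Sum>j<N. (Qi *\<^sub>v v) $ j * q j $ a)"
proof -
  have "v = (Q * Qi) *\<^sub>v v" using v by (simp add: QQi)
  also have "\<dots> = Q *\<^sub>v (Qi *\<^sub>v v)" using Q Qi v by (simp add: assoc_mult_mat_vec)
  also have "\<dots> = vec N (\<lambda>a. \<Sum>j<N. (Qi *\<^sub>v v) $ j * q j $ a)"
  proof (rule eq_vecI)
    fix a assume "a < dim_vec (vec N (\<lambda>a. \<Sum>j<N. (Qi *\<^sub>v v) $ j * q j $ a))"
    hence a: "a < N" by simp
    show "(Q *\<^sub>v (Qi *\<^sub>v v)) $ a = vec N (\<lambda>a. \<Sum>j<N. (Qi *\<^sub>v v) $ j * q j $ a) $ a"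
      using mv_expand[OF Q _ a, of "Qi *\<^sub>v v"] Qi v a Q unfolding q_def
      by (auto intro!: sum.cong simp: mult.commute)
  qed (insert Q, auto)
  finally show ?thesis .
qed

lemma detQ: "det Q \<noteq> 0"
proof
  assume "det Q = 0"
  hence "det (Q * Qi) = 0" using det_mult[OF Q Qi] by simp
  thus False using QQi by simp
qed

lemma bf_inv_eig:
  assumes x: "x \<in> carrier_vec N" and y: "y \<in> carrier_vec N"
    and sx: "s *\<^sub>v x = a \<cdot>\<^sub>v x" and sy: "s *\<^sub>v y = b \<cdot>\<^sub>v y"
  shows "bf B x y = a * b * bf B x y"
proof -
  have "bf B x y = bf B (s *\<^sub>v x) (s *\<^sub>v y)" using inv[OF x y] by simp
  also have "\<dots> = a * b * bf B x y" unfolding sx sy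
    using bf_smult_left[OF B _ _, of x "b \<cdot>\<^sub>v y" a] bf_smult_right[OF B x y, of b] x y by simp
  finally show ?thesis .
qed

lemma hdatD:
  assumes "hdat k e f lam" "i < k"
  shows "e i \<in> carrier_vec N" "f i \<in> carrier_vec N" "s *\<^sub>v e i = lam i \<cdot>\<^sub>v e i"
    "s *\<^sub>v f i = inverse (lam i) \<cdot>\<^sub>v f i" "lam i \<in> S" "lam i \<noteq> 0"
  using assms unfolding hdat_def by auto

lemma hdatB:
  assumes "hdat k e f lam" "i < k" "j < k"
  shows "bf B (e i) (e j) = 0" "bf B (f i) (f j) = 0" "bf B (e i) (f j) = (if i = j then 1 else 0)"
  using assms unfolding hdat_def by auto

lemma pr_carrier: "pr k e f v \<in> carrier_vec N" unfolding pr_def by simp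

lemma pr_perp:
  assumes h: "hdat k e f lam" and v: "v \<in> carrier_vec N" and i: "i < k"
  shows "bf B (pr k e f v) (e i) = 0" "bf B (pr k e f v) (f i) = 0"
proof -
  note ef = hdatD(1,2)[OF h]
  have "bf B (pr k e f v) (e i) = bf B v (e i) - (\<Sum>j<k. bf B v (f j) * bf B (e j) (e i) + bf B v (e j) * bf B (f j) (e i))"
    unfolding pr_def by (rule bf_pr_left[OF B ef(1)[OF i] v], insert ef, auto)
  also have "(\<Sum>j<k. bf B v (f j) * bf B (e j) (e i) + bf B v (e j) * bf B (f j) (e i))
     = (\<Sum>j<k. if j = i then bf B v (e i) else 0)"
  proof (intro sum.cong refl)
    fix j assume "j \<in> {..<k}" hence j: "j < k" by simp
    have "bf B (f j) (e i) = bf B (e i) (f j)" using bf_sym[OF B BT ef(2)[OF j] ef(1)[OF i]] .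
    thus "bf B v (f j) * bf B (e j) (e i) + bf B v (e j) * bf B (f j) (e i) = (if j = i then bf B v (e i) else 0)"
      using hdatB[OF h j i] hdatB[OF h i j] by auto
  qed
  also have "\<dots> = bf B v (e i)" using i by simp
  finally show "bf B (pr k e f v) (e i) = 0" by simp
  have "bf B (pr k e f v) (f i) = bf B v (f i) - (\<Sum>j<k. bf B v (f j) * bf B (e j) (f i) + bf B v (e j) * bf B (f j) (f i))"
    unfolding pr_def by (rule bf_pr_left[OF B ef(2)[OF i] v], insert ef, auto)
  also have "(\<Sum>j<k. bf B v (f j) * bf B (e j) (f i) + bf B v (e j) * bf B (f j) (f i))
     = (\<Sum>j<k. if j = i then bf B v (f i) else 0)"
  proof (intro sum.cong refl)
    fix j assume "j \<in> {..<k}" hence j: "j < k" by simp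
    show "bf B v (f j) * bf B (e j) (f i) + bf B v (e j) * bf B (f j) (f i) = (if j = i then bf B v (f i) else 0)"
      using hdatB[OF h j i] by auto
  qed
  also have "\<dots> = bf B v (f i)" using i by simp
  finally show "bf B (pr k e f v) (f i) = 0" by simp
qed

lemma pr_bf_perp:
  assumes h: "hdat k e f lam" and v: "v \<in> carrier_vec N" and x: "x \<in> carrier_vec N"
    and perp: "\<And>i. i < k \<Longrightarrow> bf B x (e i) = 0 \<and> bf B x (f i) = 0"
  shows "bf B x (pr k e f v) = bf B x v"
proof -
  note ef = hdatD(1,2)[OF h]
  have "bf B x (pr k e f v) = bf B (pr k e f v) x" by (rule bf_sym[OF B BT x pr_carrier])
  also have "\<dots> = bf B v x - (\<Sum>j<k. bf B v (f j) * bf B (e j) x + bf B v (e j) * bf B (f j) x)"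
    unfolding pr_def by (rule bf_pr_left[OF B x v], insert ef, auto)
  also have "(\<Sum>j<k. bf B v (f j) * bf B (e j) x + bf B v (e j) * bf B (f j) x) = 0"
  proof (intro sum.neutral ballI)
    fix j assume "j \<in> {..<k}" hence j: "j < k" by simp
    show "bf B v (f j) * bf B (e j) x + bf B v (e j) * bf B (f j) x = 0"
      using bf_sym[OF B BT x ef(1)[OF j]] bf_sym[OF B BT x ef(2)[OF j]] perp[OF j] by simp
  qed
  finally show ?thesis using bf_sym[OF B BT x v] by simp
qed

lemma pr_eig:
  assumes h: "hdat k e f lam" and v: "v \<in> carrier_vec N" and sv: "s *\<^sub>v v = mu \<cdot>\<^sub>v v"
  shows "s *\<^sub>v pr k e f v = mu \<cdot>\<^sub>v pr k e f v"
proof -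
  note ef = hdatD(1,2)[OF h]
  have "s *\<^sub>v pr k e f v = vec N (\<lambda>a. (s *\<^sub>v v)$a - (\<Sum>i<k. bf B v (f i) * (s *\<^sub>v e i) $ a + bf B v (e i) * (s *\<^sub>v f i) $ a))"
    unfolding pr_def by (rule mv_pr[OF s v], insert ef, auto)
  also have "\<dots> = mu \<cdot>\<^sub>v pr k e f v"
  proof (rule eq_vecI)
    fix a assume "a < dim_vec (mu \<cdot>\<^sub>v pr k e f v)"
    hence a: "a < N" unfolding pr_def by simp
    have t: "bf B v (f i) * (s *\<^sub>v e i) $ a + bf B v (e i) * (s *\<^sub>v f i) $ a
        = mu * (bf B v (f i) * e i $ a + bf B v (e i) * f i $ a)" if i: "i < k" for i
    proof -
      have l0: "lam i \<noteq> 0" using hdatD(6)[OF h i] .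
      have b1: "bf B v (f i) = mu * inverse (lam i) * bf B v (f i)"
        by (rule bf_inv_eig[OF v ef(2)[OF i] sv hdatD(4)[OF h i]])
      have b2: "bf B v (e i) = mu * lam i * bf B v (e i)"
        by (rule bf_inv_eig[OF v ef(1)[OF i] sv hdatD(3)[OF h i]])
      have c1: "bf B v (f i) * lam i = mu * bf B v (f i)"
      proof -
        have "bf B v (f i) * lam i = mu * inverse (lam i) * bf B v (f i) * lam i" using b1 by simp
        also have "\<dots> = mu * bf B v (f i)" using l0 by (simp add: field_simps)
        finally show ?thesis .
      qed
      have c2: "bf B v (e i) * inverse (lam i) = mu * bf B v (e i)"
      proof -
        have "bf B v (e i) * inverse (lam i) = mu * lam i * bf B v (e i) * inverse (lam i)" using b2 by simp
        also have "\<dots> = mu * bf B v (e i)" using l0 by (simp add: field_simps)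
        finally show ?thesis .
      qed
      have "(s *\<^sub>v e i) $ a = lam i * e i $ a" "(s *\<^sub>v f i) $ a = inverse (lam i) * f i $ a"
        using hdatD(3,4)[OF h i] ef[OF i] a by auto
      hence "bf B v (f i) * (s *\<^sub>v e i) $ a + bf B v (e i) * (s *\<^sub>v f i) $ a
         = (bf B v (f i) * lam i) * e i $ a + (bf B v (e i) * inverse (lam i)) * f i $ a" by simp
      also have "\<dots> = mu * (bf B v (f i) * e i $ a + bf B v (e i) * f i $ a)"
        unfolding c1 c2 by (simp add: distrib_left)
      finally show ?thesis .
    qed
    have "(\<Sum>i<k. bf B v (f i) * (s *\<^sub>v e i) $ a + bf B v (e i) * (s *\<^sub>v f i) $ a)
        = mu * (\<Sum>i<k. bf B v (f i) * e i $ a + bf B v (e i) * f i $ a)"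
      by (subst sum_distrib_left, rule sum.cong, auto simp: t)
    moreover have "(s *\<^sub>v v) $ a = mu * v $ a" using sv v a by simp
    ultimately show "vec N (\<lambda>a. (s *\<^sub>v v)$a - (\<Sum>i<k. bf B v (f i) * (s *\<^sub>v e i) $ a + bf B v (e i) * (s *\<^sub>v f i) $ a)) $ a
       = (mu \<cdot>\<^sub>v pr k e f v) $ a"
      unfolding pr_def using a by (simp add: right_diff_distrib)
  qed (auto simp: pr_def)
  finally show ?thesis .
qed

end

lemma sum_split_two:
  fixes k N :: nat
  assumes "2*k \<le> N"
  shows "(\<Sum>c<N. (if c < k then F c else if c < 2*k then G (c - k) else (0::'a::comm_monoid_add)))
       = (\<Sum>c<k. F c) + (\<Sum>c<k. G c)"
proof -
  let ?h = "\<lambda>c. (if c < k then F c else if c < 2*k then G (c - k) else (0::'a))"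
  have U: "{..<N} = {..<k} \<union> ({k..<2*k} \<union> {2*k..<N})" using assms by auto
  have "sum ?h {..<N} = sum ?h {..<k} + (sum ?h {k..<2*k} + sum ?h {2*k..<N})"
    unfolding U by (subst sum.union_disjoint, auto, subst sum.union_disjoint, auto)
  moreover have "sum ?h {2*k..<N} = 0" by (rule sum.neutral, auto)
  moreover have "sum ?h {..<k} = (\<Sum>c<k. F c)" by (rule sum.cong, auto)
  moreover have "sum ?h {k..<2*k} = (\<Sum>c<k. G c)"
  proof -
    have "sum ?h {k..<2*k} = sum ?h {0+k..<k+k}" by (simp add: mult_2)
    also have "\<dots> = (\<Sum>c\<in>{0..<k}. ?h (c + k))" by (rule sum.shift_bounds_nat_ivl)
    also have "\<dots> = (\<Sum>c<k. G c)" by (simp add: atLeast0LessThan)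
    finally show ?thesis .
  qed
  ultimately show ?thesis by simp
qed

context hsetup begin

lemma exists_pr_nonzero:
  assumes h: "hdat k e f lam" and km: "k < m"
  shows "\<exists>j<N. pr k e f (q j) \<noteq> 0\<^sub>v N"
proof (rule ccontr)
  assume "\<not> ?thesis"
  hence z: "\<And>j. j < N \<Longrightarrow> pr k e f (q j) = 0\<^sub>v N" by auto
  note ef = hdatD(1,2)[OF h]
  define M where "M = mat N N (\<lambda>(a,c). if c < k then e c $ a else if c < 2*k then f (c - k) $ a else 0)"
  define X where "X = mat N N (\<lambda>(c,j). if c < k then bf B (q j) (f c) else if c < 2*k then bf B (q j) (e (c-k)) else 0)"
  have k2: "2*k \<le> N" "2 * k < N" using km Nm by auto
  have QMX: "Q = M * X"
  proof (rule eq_matI)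
    fix a j assume a: "a < dim_row (M * X)" and j: "j < dim_col (M * X)"
    hence a: "a < N" and j: "j < N" unfolding M_def X_def by auto
    have "(M * X) $$ (a,j) = (\<Sum>c<N. M $$ (a,c) * X $$ (c,j))"
      using a j unfolding M_def X_def by (simp add: scalar_prod_def atLeast0LessThan)
    also have "\<dots> = (\<Sum>c<N. (if c < k then e c $ a * bf B (q j) (f c) else if c < 2*k then f (c - k) $ a * bf B (q j) (e (c-k)) else 0))"
      using a j unfolding M_def X_def by (intro sum.cong, auto)
    also have "\<dots> = (\<Sum>c<k. e c $ a * bf B (q j) (f c)) + (\<Sum>c<k. f c $ a * bf B (q j) (e c))"
      by (rule sum_split_two[OF k2(1)])
    also have "\<dots> = (\<Sum>i<k. bf B (q j) (f i) * e i $ a + bf B (q j) (e i) * f i $ a)"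
      by (simp add: sum.distrib mult.commute)
    also have "\<dots> = q j $ a"
    proof -
      have "pr k e f (q j) $ a = 0" using z[OF j] a by simp
      thus ?thesis unfolding pr_def using a by simp
    qed
    also have "\<dots> = Q $$ (a,j)" unfolding q_def using Q a j by simp
    finally show "Q $$ (a,j) = (M * X) $$ (a,j)" by simp
  qed (insert Q, auto simp: M_def X_def)
  have Mc: "M \<in> carrier_mat N N" "X \<in> carrier_mat N N" unfolding M_def X_def by auto
  have "det M = 0"
  proof -
    have u: "unit_vec N (N - 1) \<in> carrier_vec N" "unit_vec N (N - 1) \<noteq> 0\<^sub>v N"
      using k2 by (auto simp: unit_vec_def vec_eq_iff) 
    have "M *\<^sub>v unit_vec N (N - 1) = 0\<^sub>v N"
    proof (rule eq_vecI)
      fix a assume "a < dim_vec (0\<^sub>v N :: 'k vec)" hence a: "a < N" by simp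
      have "(M *\<^sub>v unit_vec N (N - 1)) $ a = M $$ (a, N - 1)"
        using a k2 Mc by (simp add: scalar_prod_right_unit)
      also have "\<dots> = 0" unfolding M_def using a k2 by simp
      finally show "(M *\<^sub>v unit_vec N (N - 1)) $ a = 0\<^sub>v N $ a" using a by simp
    qed (insert Mc, auto)
    thus ?thesis using det_0_iff_vec_prod_zero_field[OF Mc(1)] u by blast
  qed
  hence "det Q = 0" unfolding QMX det_mult[OF Mc] by simp
  with detQ show False by simp
qed

lemma partner:
  assumes h: "hdat k e f lam" and x: "x \<in> carrier_vec N" and x0: "x \<noteq> 0\<^sub>v N"
    and sx: "s *\<^sub>v x = mu \<cdot>\<^sub>v x"
    and perp: "\<And>i. i < k \<Longrightarrow> bf B x (e i) = 0 \<and> bf B x (f i) = 0"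
  shows "\<exists>y. y \<in> carrier_vec N \<and> s *\<^sub>v y = inverse mu \<cdot>\<^sub>v y \<and>
     (\<forall>i<k. bf B y (e i) = 0 \<and> bf B y (f i) = 0) \<and> bf B x y = 1"
proof -
  obtain z where z: "z \<in> carrier_vec N" and bz: "bf B x z \<noteq> 0" using nondeg[OF x] x0 by blast
  have "bf B x z = (\<Sum>j<N. (Qi *\<^sub>v z) $ j * bf B x (q j))"
    by (subst q_span[OF z], rule bf_lc_right[OF B BT x], auto intro: q_carrier)
  have "\<exists>j<N. bf B x (q j) \<noteq> 0"
  proof (rule ccontr)
    assume "\<not> (\<exists>j<N. bf B x (q j) \<noteq> 0)"
    hence "(\<Sum>j<N. (Qi *\<^sub>v z) $ j * bf B x (q j)) = 0" by (intro sum.neutral) auto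
    with bz \<open>bf B x z = _\<close> show False by simp
  qed
  then obtain j where j: "j < N" and bq: "bf B x (q j) \<noteq> 0" by blast
  let ?nu = "D0 $$ (j,j)"
  have "bf B x (q j) = mu * ?nu * bf B x (q j)"
    by (rule bf_inv_eig[OF x q_carrier[OF j] sx q_eig[OF j]])
  hence mn: "mu * ?nu = 1" using bq by simp
  hence nu: "?nu = inverse mu" by (metis inverse_unique mult.commute)
  define y0 where "y0 = pr k e f (q j)"
  have y0c: "y0 \<in> carrier_vec N" unfolding y0_def by (rule pr_carrier)
  have sy0: "s *\<^sub>v y0 = ?nu \<cdot>\<^sub>v y0" unfolding y0_def by (rule pr_eig[OF h q_carrier[OF j] q_eig[OF j]])
  have py0: "\<And>i. i < k \<Longrightarrow> bf B y0 (e i) = 0 \<and> bf B y0 (f i) = 0"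
    unfolding y0_def using pr_perp[OF h q_carrier[OF j]] by auto
  have by0: "bf B x y0 = bf B x (q j)" unfolding y0_def by (rule pr_bf_perp[OF h q_carrier[OF j] x perp])
  define y where "y = inverse (bf B x y0) \<cdot>\<^sub>v y0"
  have yc: "y \<in> carrier_vec N" unfolding y_def using y0c by simp
  have "s *\<^sub>v y = inverse mu \<cdot>\<^sub>v y" unfolding y_def using s y0c
    by (simp add: mult_mat_vec sy0 nu smult_smult_assoc mult.commute)
  moreover have "\<forall>i<k. bf B y (e i) = 0 \<and> bf B y (f i) = 0"
    unfolding y_def using bf_smult_left[OF B y0c] hdatD(1,2)[OF h] py0 by simp
  moreover have "bf B x y = 1" unfolding y_def using bf_smult_right[OF B x y0c] by0 bq by simp
  ultimately show ?thesis using yc by blast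
qed

end

lemma fixp_zero: "(b::'k::field) = c * b \<Longrightarrow> c \<noteq> 1 \<Longrightarrow> b = 0"
proof -
  assume a: "b = c * b" "c \<noteq> 1"
  have "(c - 1) * b = c * b - b" by (simp add: algebra_simps)
  also have "\<dots> = 0" by (simp only: a(1)[symmetric] diff_self)
  finally show "b = 0" using a(2) by simp
qed

lemma sq_ne_one: "(l::'k::field) \<noteq> 1 \<Longrightarrow> l \<noteq> -1 \<Longrightarrow> l * l \<noteq> 1"
proof
  assume "l \<noteq> 1" "l \<noteq> -1" "l * l = 1"
  hence "(l - 1) * (l + 1) = 0" by (simp add: algebra_simps)
  hence "l - 1 = 0 \<or> l + 1 = 0" by simp
  thus False using \<open>l \<noteq> 1\<close> \<open>l \<noteq> -1\<close> by (auto simp: eq_neg_iff_add_eq_0)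
qed

lemma inv_sq_ne_one: "(l::'k::field) * l \<noteq> 1 \<Longrightarrow> l \<noteq> 0 \<Longrightarrow> inverse l * inverse l \<noteq> 1"
proof
  assume "l * l \<noteq> 1" "l \<noteq> 0" "inverse l * inverse l = 1"
  hence "inverse (l * l) = 1" by (simp add: inverse_mult_distrib)
  hence "l * l = 1" by (metis inverse_1 inverse_inverse_eq)
  thus False using \<open>l * l \<noteq> 1\<close> by simp
qed

context hsetup begin

lemma hdat_extend:
  assumes h: "hdat k e f lam"
    and e': "e' \<in> carrier_vec N" and f': "f' \<in> carrier_vec N"
    and se: "s *\<^sub>v e' = l \<cdot>\<^sub>v e'" and sf: "s *\<^sub>v f' = inverse l \<cdot>\<^sub>v f'"
    and lS: "l \<in> S" and l0: "l \<noteq> 0" and l1: "l \<noteq> 1" and lm1: "l \<noteq> -1"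
    and pe: "\<And>i. i < k \<Longrightarrow> bf B e' (e i) = 0 \<and> bf B e' (f i) = 0"
    and pf: "\<And>i. i < k \<Longrightarrow> bf B f' (e i) = 0 \<and> bf B f' (f i) = 0"
    and ef: "bf B e' f' = 1"
  shows "hdat (Suc k) (e(k:=e')) (f(k:=f')) (lam(k:=l))"
proof -
  have ll: "l * l \<noteq> 1" by (rule sq_ne_one[OF l1 lm1])
  have ee: "bf B e' e' = 0"
  proof -
    have "bf B e' e' = l * l * bf B e' e'" by (rule bf_inv_eig[OF e' e' se se])
    thus ?thesis using ll by (rule fixp_zero)
  qed
  have ff: "bf B f' f' = 0"
  proof -
    have "bf B f' f' = inverse l * inverse l * bf B f' f'" by (rule bf_inv_eig[OF f' f' sf sf])
    moreover have "inverse l * inverse l \<noteq> 1" using inv_sq_ne_one[OF ll l0] .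
    ultimately show ?thesis by (rule fixp_zero)
  qed
  note hd1 = hdatD[OF h] and hd2 = hdatB[OF h]
  show ?thesis unfolding hdat_def
  proof (rule conjI; intro allI impI)
    fix i assume i: "i < Suc k"
    show "(e(k := e')) i \<in> carrier_vec N \<and> (f(k := f')) i \<in> carrier_vec N \<and>
       s *\<^sub>v (e(k := e')) i = (lam(k := l)) i \<cdot>\<^sub>v (e(k := e')) i \<and>
       s *\<^sub>v (f(k := f')) i = inverse ((lam(k := l)) i) \<cdot>\<^sub>v (f(k := f')) i \<and>
       (lam(k := l)) i \<in> S \<and> (lam(k := l)) i \<noteq> 0"
      using i hd1[of i] e' f' se sf lS l0 by (cases "i = k", auto)
  next
    fix i j assume i: "i < Suc k" and j: "j < Suc k"
    show "bf B ((e(k := e')) i) ((e(k := e')) j) = 0 \<and> bf B ((f(k := f')) i) ((f(k := f')) j) = 0 \<and>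
       bf B ((e(k := e')) i) ((f(k := f')) j) = (if i = j then 1 else 0)"
    proof (cases "i = k")
      case True
      show ?thesis
      proof (cases "j = k")
        case True
        thus ?thesis using \<open>i = k\<close> ee ff ef by simp
      next
        case False
        hence j: "j < k" using j by simp
        thus ?thesis using \<open>i = k\<close> pe[OF j] pf[OF j] by simp
      qed
    next
      case False
      hence i: "i < k" using i by simp
      show ?thesis
      proof (cases "j = k")
        case True
        have "bf B (e i) e' = 0" using bf_sym[OF B BT hd1(1)[OF i] e'] pe[OF i] by simp
        moreover have "bf B (f i) f' = 0" using bf_sym[OF B BT hd1(2)[OF i] f'] pf[OF i] by simp
        moreover have "bf B (e i) f' = 0" using bf_sym[OF B BT hd1(1)[OF i] f'] pf[OF i] by simp
        ultimately show ?thesis using True i by simp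
      next
        case False
        hence j: "j < k" using j by simp
        thus ?thesis using i hd2[OF i j] by simp
      qed
    qed
  qed
qed

lemma hdat_step:
  assumes h: "hdat k e f lam" and km: "k < m"
  shows "\<exists>e' f' l. hdat (Suc k) (e(k:=e')) (f(k:=f')) (lam(k:=l))"
proof -
  obtain j where j: "j < N" and x0: "pr k e f (q j) \<noteq> 0\<^sub>v N" using exists_pr_nonzero[OF h km] by blast
  define x where "x = pr k e f (q j)"
  define mu where "mu = D0 $$ (j,j)"
  have x: "x \<in> carrier_vec N" unfolding x_def by (rule pr_carrier)
  have sx: "s *\<^sub>v x = mu \<cdot>\<^sub>v x" unfolding x_def mu_def by (rule pr_eig[OF h q_carrier[OF j] q_eig[OF j]])
  have px: "\<And>i. i < k \<Longrightarrow> bf B x (e i) = 0 \<and> bf B x (f i) = 0" unfolding x_def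
    using pr_perp[OF h q_carrier[OF j]] by auto
  obtain y where y: "y \<in> carrier_vec N" and sy: "s *\<^sub>v y = inverse mu \<cdot>\<^sub>v y"
    and py: "\<And>i. i < k \<Longrightarrow> bf B y (e i) = 0 \<and> bf B y (f i) = 0" and xy: "bf B x y = 1"
    using partner[OF h x x0[folded x_def] sx px] by blast
  have mu: "mu \<noteq> 0" "mu \<noteq> 1" "mu \<noteq> -1" using d0[OF j] unfolding mu_def by auto
  show ?thesis
  proof (cases "mu \<in> S")
    case True
    show ?thesis using hdat_extend[OF h x y sx sy True mu px py xy] by blast
  next
    case False
    have iS: "inverse mu \<in> S" using Sprop[OF mu] False by simp
    have im: "inverse mu \<noteq> 0" "inverse mu \<noteq> 1" "inverse mu \<noteq> -1" using mu
      by (metis inverse_1 inverse_inverse_eq inverse_zero, metis inverse_1 inverse_inverse_eq,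
          metis inverse_minus_eq inverse_1 inverse_inverse_eq)
    have sx': "s *\<^sub>v x = inverse (inverse mu) \<cdot>\<^sub>v x" using sx by simp
    have yx: "bf B y x = 1" using bf_sym[OF B BT x y] xy by simp
    show ?thesis using hdat_extend[OF h y x sy sx' iS im py px yx] by blast
  qed
qed

lemma hdat_exists: "k \<le> m \<Longrightarrow> \<exists>e f lam. hdat k e f lam"
proof (induct k)
  case 0
  show ?case by (auto simp: hdat_def)
next
  case (Suc k)
  then obtain e f lam where "hdat k e f lam" by auto
  with hdat_step[of k e f lam] Suc(2) show ?case by auto
qed

end

lemma inv_eq_neg_iff: "(mu::'k::field) \<noteq> 0 \<Longrightarrow> inverse mu = - mu \<longleftrightarrow> mu * mu = -1"
proof -
  assume m: "mu \<noteq> 0"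
  have "inverse mu = - mu \<longleftrightarrow> mu * (- mu) = 1"
  proof
    assume "inverse mu = - mu"
    hence "mu * (- mu) = mu * inverse mu" by simp
    thus "mu * (- mu) = 1" using m by simp
  next
    assume "mu * (- mu) = 1" thus "inverse mu = - mu" by (rule inverse_unique)
  qed
  also have "\<dots> \<longleftrightarrow> mu * mu = -1" by (auto simp: minus_equation_iff)
  finally show ?thesis .
qed

lemma inv_eq_self_iff: "(mu::'k::field) \<noteq> 0 \<Longrightarrow> inverse mu = mu \<longleftrightarrow> mu * mu = 1"
proof -
  assume m: "mu \<noteq> 0"
  show ?thesis
  proof
    assume "inverse mu = mu"
    hence "mu * mu = mu * inverse mu" by simp
    thus "mu * mu = 1" using m by simp
  next
    assume "mu * mu = 1" thus "inverse mu = mu" by (rule inverse_unique)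
  qed
qed

lemma S_exists:
  assumes two: "(2::'k::field) \<noteq> 0"
  shows "\<exists>S::'k set. (\<forall>mu\<in>S. mu \<noteq> 0 \<and> mu \<noteq> 1 \<and> mu \<noteq> -1) \<and>
     (\<forall>mu. mu \<noteq> 0 \<and> mu \<noteq> 1 \<and> mu \<noteq> -1 \<longrightarrow> (mu \<in> S \<longleftrightarrow> inverse mu \<notin> S)) \<and>
     (\<forall>mu\<in>S. mu * mu \<noteq> -1 \<longrightarrow> -mu \<in> S)"
proof -
  define orb :: "'k \<Rightarrow> 'k set" where "orb mu = {mu, inverse mu, -mu, -inverse mu}" for mu
  define rep where "rep mu = (SOME r. r \<in> orb mu)" for mu
  have rep_in: "rep mu \<in> orb mu" for mu unfolding rep_def by (rule someI[of _ mu], simp add: orb_def)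
  have orb_inv: "orb (inverse mu) = orb mu" for mu unfolding orb_def by (simp add: insert_commute)
  have orb_neg: "orb (-mu) = orb mu" for mu unfolding orb_def by (simp add: insert_commute inverse_minus_eq)
  have rep_inv: "rep (inverse mu) = rep mu" for mu unfolding rep_def orb_inv ..
  have rep_neg: "rep (-mu) = rep mu" for mu unfolding rep_def orb_neg ..
  have neq_neg: "x \<noteq> -x" if "x \<noteq> 0" for x :: 'k
  proof
    assume a: "x = -x"
    have "2 * x = x + x" by (rule mult_2)
    also have "\<dots> = x + (-x)" using arg_cong[where f="\<lambda>y. x + y", OF a] .
    also have "\<dots> = 0" by simp
    finally show False using two that by simp
  qed
  define S where "S = {mu. mu \<noteq> 0 \<and> mu \<noteq> 1 \<and> mu \<noteq> -1 \<and> (mu = rep mu \<or> (mu = - rep mu \<and> rep mu * rep mu \<noteq> -1))}"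
  have S1: "mu \<in> S \<longleftrightarrow> inverse mu \<notin> S" if mu: "mu \<noteq> 0" "mu \<noteq> 1" "mu \<noteq> -1" for mu
  proof -
    obtain r where r: "r = rep mu" by simp
    have im: "inverse mu \<noteq> 0" "inverse mu \<noteq> 1" "inverse mu \<noteq> -1" using mu
      by (metis inverse_1 inverse_inverse_eq inverse_zero, metis inverse_1 inverse_inverse_eq,
          metis inverse_minus_eq inverse_1 inverse_inverse_eq)
    have ll: "mu * mu \<noteq> 1"
    proof
      assume "mu * mu = 1"
      hence "(mu - 1) * (mu + 1) = 0" by (simp add: algebra_simps)
      hence "mu - 1 = 0 \<or> mu + 1 = 0" by simp
      thus False using mu by (auto simp: eq_neg_iff_add_eq_0)
    qed
    have nm: "mu \<noteq> -mu" "inverse mu \<noteq> mu" "inverse mu \<noteq> - inverse mu" "mu \<noteq> inverse mu"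
      using neq_neg[OF mu(1)] neq_neg[OF im(1)] inv_eq_self_iff[OF mu(1)] ll by auto
    have sq: "inverse mu = - mu \<longleftrightarrow> mu * mu = -1" by (rule inv_eq_neg_iff[OF mu(1)])
    have "mu = - inverse mu \<longleftrightarrow> inverse mu = - mu" by (metis minus_minus)
    hence sq2: "mu = - inverse mu \<longleftrightarrow> mu * mu = -1" using sq by simp
    have ii: "inverse mu * inverse mu = inverse (mu * mu)" by (simp add: inverse_mult_distrib)
    have iim1: "inverse mu * inverse mu = -1 \<longleftrightarrow> mu * mu = -1"
      unfolding ii by (metis inverse_minus_eq inverse_1 inverse_inverse_eq)
    have A: "mu \<in> S \<longleftrightarrow> (mu = r \<or> (mu = - r \<and> r * r \<noteq> -1))" using mu unfolding S_def r by simp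
    have Bi: "inverse mu \<in> S \<longleftrightarrow> (inverse mu = r \<or> (inverse mu = - r \<and> r * r \<noteq> -1))"
      using im rep_inv[of mu] unfolding S_def r by simp
    have "r \<in> orb mu" unfolding r by (rule rep_in)
    hence "r = mu \<or> r = inverse mu \<or> r = -mu \<or> r = - inverse mu" unfolding orb_def by auto
    thus ?thesis
    proof (elim disjE)
      assume "r = mu" thus ?thesis using A Bi nm sq by auto
    next
      assume "r = inverse mu" thus ?thesis using A Bi nm sq2 iim1 by auto
    next
      assume "r = - mu" thus ?thesis using A Bi nm sq by auto
    next
      assume "r = - inverse mu" thus ?thesis using A Bi nm sq2 iim1 by auto
    qed
  qed
  have S2: "-mu \<in> S" if "mu \<in> S" "mu * mu \<noteq> -1" for mu
  proof -
    obtain r where r: "r = rep mu" by simp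
    have rn: "rep (-mu) = r" using rep_neg r by simp
    from that have mu: "mu \<noteq> 0" "mu \<noteq> 1" "mu \<noteq> -1" and rr: "mu = r \<or> (mu = - r \<and> r * r \<noteq> -1)"
      unfolding S_def r by simp_all
    have "-mu \<noteq> 0" "-mu \<noteq> 1" "-mu \<noteq> -1" using mu by (auto simp: minus_equation_iff)
    moreover have "-mu = r \<or> (-mu = - r \<and> r * r \<noteq> -1)" using rr that(2) by auto
    ultimately show ?thesis unfolding S_def using rn by simp
  qed
  have S0: "\<forall>mu\<in>S. mu \<noteq> 0 \<and> mu \<noteq> 1 \<and> mu \<noteq> -1" unfolding S_def by blast
  show ?thesis using S0 S1 S2 by blast
qed


definition tauP :: "nat \<Rightarrow> nat \<Rightarrow> nat" where
  "tauP m j = (if j < m then j + m else if j < 2*m then j - m else j)"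

definition Jm :: "nat \<Rightarrow> 'k::field mat" where
  "Jm m = mat (2*m) (2*m) (\<lambda>(i,j). if j = tauP m i then 1 else 0)"

definition mkP :: "nat \<Rightarrow> (nat \<Rightarrow> 'k::field vec) \<Rightarrow> (nat \<Rightarrow> 'k vec) \<Rightarrow> 'k mat" where
  "mkP m e f = mat (2*m) (2*m) (\<lambda>(a,j). if j < m then e j $ a else f (j - m) $ a)"

definition dv :: "nat \<Rightarrow> (nat \<Rightarrow> 'k::field) \<Rightarrow> nat \<Rightarrow> 'k" where
  "dv m lam j = (if j < m then lam j else inverse (lam (j - m)))"

definition Dm :: "nat \<Rightarrow> (nat \<Rightarrow> 'k::field) \<Rightarrow> 'k mat" where
  "Dm m lam = mat (2*m) (2*m) (\<lambda>(i,j). if i = j then dv m lam i else 0)"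

definition hyp :: "'k::field mat \<Rightarrow> 'k mat \<Rightarrow> nat \<Rightarrow> (nat \<Rightarrow> 'k vec) \<Rightarrow> (nat \<Rightarrow> 'k vec) \<Rightarrow> (nat \<Rightarrow> 'k) \<Rightarrow> bool" where
  "hyp B s m e f lam \<longleftrightarrow> (\<forall>i<m. e i \<in> carrier_vec (2*m) \<and> f i \<in> carrier_vec (2*m) \<and> s *\<^sub>v e i = lam i \<cdot>\<^sub>v e i
      \<and> s *\<^sub>v f i = inverse (lam i) \<cdot>\<^sub>v f i \<and> lam i \<noteq> 0) \<and>
    (\<forall>i<m. \<forall>j<m. bf B (e i) (e j) = 0 \<and> bf B (f i) (f j) = 0 \<and> bf B (e i) (f j) = (if i = j then 1 else 0))"

lemma tauP_invol: "tauP m (tauP m j) = j" unfolding tauP_def by auto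

lemma tauP_permutes: "tauP m permutes {0..<2*m}"
proof -
  have "bij_betw (tauP m) {0..<2*m} {0..<2*m}"
    by (rule bij_betw_byWitness[where f' = "tauP m"], auto simp: tauP_invol, auto simp: tauP_def)
  thus ?thesis by (rule bij_imp_permutes, simp add: tauP_def)
qed

lemma Jm_carrier[simp]: "Jm m \<in> carrier_mat (2*m) (2*m)" unfolding Jm_def by simp
lemma mkP_carrier[simp]: "mkP m e f \<in> carrier_mat (2*m) (2*m)" unfolding mkP_def by simp
lemma Dm_carrier[simp]: "Dm m lam \<in> carrier_mat (2*m) (2*m)" unfolding Dm_def by simp

lemma mat_dims[simp]: "dim_row (mkP m e f) = 2*m" "dim_col (mkP m e f) = 2*m"
  "dim_row (Jm m :: 'k::field mat) = 2*m" "dim_col (Jm m :: 'k::field mat) = 2*m"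
  "dim_row (Dm m lam) = 2*m" "dim_col (Dm m lam) = 2*m"
  unfolding mkP_def Jm_def Dm_def by simp_all

lemma Jm_sq: "Jm m * (Jm m :: 'k::field mat) = 1\<^sub>m (2*m)"
proof (rule eq_matI)
  fix i j assume "i < dim_row (1\<^sub>m (2*m) :: 'k mat)" "j < dim_col (1\<^sub>m (2*m) :: 'k mat)"
  hence i: "i < 2*m" and j: "j < 2*m" by auto
  have "(Jm m * Jm m :: 'k mat) $$ (i,j) = (\<Sum>c\<in>{0..<2*m}. (if c = tauP m i then 1 else 0) * (if j = tauP m c then 1 else 0))"
    using i j unfolding Jm_def by (simp add: scalar_prod_def)
  also have "\<dots> = (\<Sum>c\<in>{0..<2*m}. if c = tauP m i then (if j = tauP m (tauP m i) then 1 else 0) else (0::'k))"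
    by (intro sum.cong, auto)
  also have "\<dots> = (if j = i then 1 else 0)"
    using i tauP_invol[of m i] by (simp add: tauP_def split: if_splits)
  finally show "(Jm m * Jm m :: 'k mat) $$ (i,j) = 1\<^sub>m (2*m) $$ (i,j)" using i j by simp
qed auto

lemma col_mkP: assumes "hyp B s m e f lam" "j < 2*m"
  shows "col (mkP m e f) j = (if j < m then e j else f (j - m))"
proof (cases "j < m")
  case True
  hence "e j \<in> carrier_vec (2*m)" using assms(1) unfolding hyp_def by auto
  thus ?thesis using True assms(2) unfolding mkP_def by (intro eq_vecI, auto)
next
  case False
  hence "j - m < m" using assms(2) by simp
  hence "f (j - m) \<in> carrier_vec (2*m)" using assms(1) unfolding hyp_def by auto
  thus ?thesis using False assms(2) unfolding mkP_def by (intro eq_vecI, auto)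
qed

lemma quad_entry:
  fixes P B :: "'k::field mat"
  assumes P: "P \<in> carrier_mat n n" and B: "B \<in> carrier_mat n n" and i: "i < n" and j: "j < n"
  shows "(P\<^sup>T * B * P) $$ (i,j) = bf B (col P i) (col P j)"
proof -
  have "P\<^sup>T * B * P = P\<^sup>T * (B * P)" using P B by (simp add: assoc_mult_mat[of _ n n _ n _ n])
  hence "(P\<^sup>T * B * P) $$ (i,j) = row P\<^sup>T i \<bullet> col (B * P) j" using P B i j by simp
  also have "\<dots> = col P i \<bullet> (B *\<^sub>v col P j)"
  proof -
    have r: "row P\<^sup>T i = col P i" using P i by (simp add: row_transpose)
    have c: "col (B * P) j = B *\<^sub>v col P j" by (rule col_mult2[OF B P j])
    show ?thesis by (simp only: r c)
  qed
  finally show ?thesis unfolding bf_def .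
qed

lemma hyp_PtBP:
  fixes B s :: "'k::field mat"
  assumes h: "hyp B s m e f lam" and B: "B \<in> carrier_mat (2*m) (2*m)" and BT: "B\<^sup>T = B"
  shows "(mkP m e f)\<^sup>T * B * mkP m e f = Jm m"
proof (rule eq_matI)
  fix i j assume "i < dim_row (Jm m :: 'k mat)" "j < dim_col (Jm m :: 'k mat)"
  hence i: "i < 2*m" and j: "j < 2*m" unfolding Jm_def by auto
  have ef: "\<And>a. a < m \<Longrightarrow> e a \<in> carrier_vec (2*m) \<and> f a \<in> carrier_vec (2*m)" using h unfolding hyp_def by auto
  have R: "\<And>a b. a < m \<Longrightarrow> b < m \<Longrightarrow> bf B (e a) (e b) = 0 \<and> bf B (f a) (f b) = 0 \<and> bf B (e a) (f b) = (if a = b then 1 else 0)"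
    using h unfolding hyp_def by auto
  have "((mkP m e f)\<^sup>T * B * mkP m e f) $$ (i,j) = bf B (col (mkP m e f) i) (col (mkP m e f) j)"
    by (rule quad_entry[OF mkP_carrier B i j])
  also have "\<dots> = Jm m $$ (i,j)"
  proof (cases "i < m")
    case True
    show ?thesis
    proof (cases "j < m")
      case True
      thus ?thesis using \<open>i < m\<close> i j R col_mkP[OF h i] col_mkP[OF h j] unfolding Jm_def tauP_def by auto
    next
      case False
      thus ?thesis using \<open>i < m\<close> i j R[of i "j - m"] col_mkP[OF h i] col_mkP[OF h j] unfolding Jm_def tauP_def by auto
    qed
  next
    case False
    show ?thesis
    proof (cases "j < m")
      case True
      have "bf B (f (i - m)) (e j) = bf B (e j) (f (i - m))"
        using bf_sym[OF B BT] ef[of j] ef[of "i - m"] True False i by auto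
      thus ?thesis using \<open>\<not> i < m\<close> True i j R[of j "i - m"] col_mkP[OF h i] col_mkP[OF h j] unfolding Jm_def tauP_def by auto
    next
      case False
      thus ?thesis using \<open>\<not> i < m\<close> i j R[of "i - m" "j - m"] col_mkP[OF h i] col_mkP[OF h j] unfolding Jm_def tauP_def by auto
    qed
  qed
  finally show "((mkP m e f)\<^sup>T * B * mkP m e f) $$ (i,j) = Jm m $$ (i,j)" .
qed (insert B, auto simp: Jm_def)

lemma hyp_sP:
  fixes B s :: "'k::field mat"
  assumes h: "hyp B s m e f lam" and s: "s \<in> carrier_mat (2*m) (2*m)"
  shows "s * mkP m e f = mkP m e f * Dm m lam"
proof (rule eq_matI)
  fix a j assume "a < dim_row (mkP m e f * Dm m lam)" "j < dim_col (mkP m e f * Dm m lam)"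
  hence a: "a < 2*m" and j: "j < 2*m" by (auto simp: mkP_def Dm_def)
  have ef: "\<And>a. a < m \<Longrightarrow> e a \<in> carrier_vec (2*m) \<and> f a \<in> carrier_vec (2*m) \<and> s *\<^sub>v e a = lam a \<cdot>\<^sub>v e a
      \<and> s *\<^sub>v f a = inverse (lam a) \<cdot>\<^sub>v f a" using h unfolding hyp_def by auto
  have "(s * mkP m e f) $$ (a,j) = (s *\<^sub>v col (mkP m e f) j) $ a"
    using s a j by simp
  also have "\<dots> = dv m lam j * mkP m e f $$ (a,j)"
  proof (cases "j < m")
    case True
    from ef[OF True] have "e j \<in> carrier_vec (2*m)" "s *\<^sub>v e j = lam j \<cdot>\<^sub>v e j" by auto
    thus ?thesis unfolding col_mkP[OF h j] using True a j unfolding dv_def mkP_def by simp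
  next
    case False
    hence jm: "j - m < m" using j by simp
    from ef[OF jm] have "f (j - m) \<in> carrier_vec (2*m)" "s *\<^sub>v f (j - m) = inverse (lam (j - m)) \<cdot>\<^sub>v f (j - m)" by auto
    thus ?thesis unfolding col_mkP[OF h j] using False a j unfolding dv_def mkP_def by simp
  qed
  also have "\<dots> = (mkP m e f * Dm m lam) $$ (a,j)"
  proof -
    have "(mkP m e f * Dm m lam) $$ (a,j) = (\<Sum>b\<in>{0..<2*m}. mkP m e f $$ (a,b) * Dm m lam $$ (b,j))"
      using a j by (simp add: scalar_prod_def)
    also have "\<dots> = (\<Sum>b\<in>{0..<2*m}. if b = j then mkP m e f $$ (a,j) * dv m lam j else 0)"
      using j unfolding Dm_def by (intro sum.cong, auto)
    also have "\<dots> = mkP m e f $$ (a,j) * dv m lam j" using j by simp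
    finally show ?thesis by (simp add: mult.commute)
  qed
  finally show "(s * mkP m e f) $$ (a,j) = (mkP m e f * Dm m lam) $$ (a,j)" .
qed (insert s, auto)

definition Pinv :: "'k::field mat \<Rightarrow> nat \<Rightarrow> (nat \<Rightarrow> 'k vec) \<Rightarrow> (nat \<Rightarrow> 'k vec) \<Rightarrow> 'k mat" where
  "Pinv B m e f = Jm m * (mkP m e f)\<^sup>T * B"

lemma Pinv_carrier[simp]: "B \<in> carrier_mat (2*m) (2*m) \<Longrightarrow> Pinv B m e f \<in> carrier_mat (2*m) (2*m)"
proof -
  assume B: "B \<in> carrier_mat (2*m) (2*m)"
  have "(mkP m e f)\<^sup>T \<in> carrier_mat (2*m) (2*m)" by simp
  hence "Jm m * (mkP m e f)\<^sup>T \<in> carrier_mat (2*m) (2*m)" using Jm_carrier by (rule mult_carrier_mat[rotated])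
  thus ?thesis unfolding Pinv_def using B by (rule mult_carrier_mat)
qed

lemma hyp_Pinv:
  fixes B s :: "'k::field mat"
  assumes h: "hyp B s m e f lam" and B: "B \<in> carrier_mat (2*m) (2*m)" and BT: "B\<^sup>T = B"
  shows "Pinv B m e f * mkP m e f = 1\<^sub>m (2*m)" "mkP m e f * Pinv B m e f = 1\<^sub>m (2*m)"
proof -
  let ?P = "mkP m e f" let ?n = "2*m"
  have Pc: "?P \<in> carrier_mat ?n ?n" by simp
  have PT: "?P\<^sup>T \<in> carrier_mat ?n ?n" by simp
  have "Pinv B m e f * ?P = Jm m * ?P\<^sup>T * B * ?P" unfolding Pinv_def ..
  also have "\<dots> = Jm m * (?P\<^sup>T * B) * ?P" using PT B by (simp add: assoc_mult_mat[of _ ?n ?n _ ?n _ ?n])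
  also have "\<dots> = Jm m * (?P\<^sup>T * B * ?P)" using PT B Pc
    by (subst assoc_mult_mat[of "Jm m" ?n ?n _ ?n _ ?n], auto)
  finally have "Pinv B m e f * ?P = Jm m * (?P\<^sup>T * B * ?P)" .
  also have "\<dots> = 1\<^sub>m ?n" unfolding hyp_PtBP[OF h B BT] Jm_sq ..
  finally show l: "Pinv B m e f * ?P = 1\<^sub>m ?n" .
  show "?P * Pinv B m e f = 1\<^sub>m ?n"
    by (rule mat_mult_left_right_inverse[OF _ Pc l], insert B, simp)
qed


lemma hyp_conj:
  fixes B s s' :: "'k::field mat"
  assumes h: "hyp B s m e f lam" and h': "hyp B s' m e' f' lam'" and eq: "\<And>i. i < m \<Longrightarrow> lam' i = lam i"
    and B: "B \<in> carrier_mat (2*m) (2*m)" and BT: "B\<^sup>T = B"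
    and s: "s \<in> carrier_mat (2*m) (2*m)" and s': "s' \<in> carrier_mat (2*m) (2*m)"
  shows "\<exists>g gi. g \<in> carrier_mat (2*m) (2*m) \<and> gi \<in> carrier_mat (2*m) (2*m) \<and> g * gi = 1\<^sub>m (2*m) \<and> gi * g = 1\<^sub>m (2*m)
     \<and> g * s = s' * g \<and> g\<^sup>T * B * g = B \<and> det g * det (mkP m e f) = det (mkP m e' f')"
proof -
  let ?n = "2*m"
  define P where "P = mkP m e f"
  define P' where "P' = mkP m e' f'"
  define Pi where "Pi = Pinv B m e f"
  define Pi' where "Pi' = Pinv B m e' f'"
  define D where "D = Dm m lam"
  define J where "J = (Jm m :: 'k mat)"
  have c: "P \<in> carrier_mat ?n ?n" "P' \<in> carrier_mat ?n ?n" "Pi \<in> carrier_mat ?n ?n" "Pi' \<in> carrier_mat ?n ?n"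
    "D \<in> carrier_mat ?n ?n" "J \<in> carrier_mat ?n ?n"
    unfolding P_def P'_def Pi_def Pi'_def D_def J_def using B by auto
  have DD: "Dm m lam' = D" unfolding D_def Dm_def dv_def using eq by (intro eq_matI, auto)
  have PiP: "Pi * P = 1\<^sub>m ?n" "P * Pi = 1\<^sub>m ?n" unfolding Pi_def P_def using hyp_Pinv[OF h B BT] by auto
  have PiP': "Pi' * P' = 1\<^sub>m ?n" "P' * Pi' = 1\<^sub>m ?n" unfolding Pi'_def P'_def using hyp_Pinv[OF h' B BT] by auto
  have sP: "s * P = P * D" unfolding P_def D_def by (rule hyp_sP[OF h s])
  have sP': "s' * P' = P' * D" unfolding P'_def DD[symmetric] by (rule hyp_sP[OF h' s'])
  have PBP: "P\<^sup>T * B * P = J" unfolding P_def J_def by (rule hyp_PtBP[OF h B BT])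
  have PBP': "P'\<^sup>T * B * P' = J" unfolding P'_def J_def by (rule hyp_PtBP[OF h' B BT])
  note as = assoc_mult_mat[of _ ?n ?n _ ?n _ ?n]
  define g where "g = P' * Pi"
  define gi where "gi = P * Pi'"
  have gc: "g \<in> carrier_mat ?n ?n" "gi \<in> carrier_mat ?n ?n" unfolding g_def gi_def using c by auto
  have "g * gi = P' * (Pi * P) * Pi'" unfolding g_def gi_def using c by (simp add: as)
  also have "\<dots> = 1\<^sub>m ?n" using c PiP PiP' by simp
  finally have ggi: "g * gi = 1\<^sub>m ?n" .
  have "gi * g = P * (Pi' * P') * Pi" unfolding g_def gi_def using c by (simp add: as)
  also have "\<dots> = 1\<^sub>m ?n" using c PiP PiP' by simp
  finally have gig: "gi * g = 1\<^sub>m ?n" .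
  have Pis: "Pi * s = D * Pi"
  proof -
    have "Pi * s = Pi * s * (P * Pi)" using c s PiP by simp
    also have "\<dots> = Pi * (s * P) * Pi" using c s by (simp add: as)
    also have "\<dots> = (Pi * P) * D * Pi" unfolding sP using c by (simp add: as)
    also have "\<dots> = D * Pi" using c PiP by simp
    finally show ?thesis .
  qed
  have gs: "g * s = s' * g"
  proof -
    have "g * s = P' * (Pi * s)" unfolding g_def using c s by (simp add: as)
    also have "\<dots> = (P' * D) * Pi" unfolding Pis using c by (simp add: as)
    also have "\<dots> = s' * g" unfolding sP'[symmetric] g_def using c s' by (simp add: as)
    finally show ?thesis .
  qed
  have gB: "g\<^sup>T * B * g = B"
  proof -
    have "g\<^sup>T * B * g = Pi\<^sup>T * (P'\<^sup>T * B * P') * Pi"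
      unfolding g_def using c B by (simp add: transpose_mult[OF c(2) c(3)] as)
    also have "\<dots> = Pi\<^sup>T * (P\<^sup>T * B * P) * Pi" unfolding PBP PBP' ..
    also have "\<dots> = (P * Pi)\<^sup>T * B * (P * Pi)"
      using c B by (simp add: transpose_mult[OF c(1) c(3)] as)
    also have "\<dots> = B" using PiP B by simp
    finally show ?thesis .
  qed
  have "det g * det P = det P' * (det Pi * det P)" unfolding g_def using det_mult[OF c(2) c(3)] by simp
  also have "det Pi * det P = 1" using det_mult[OF c(3) c(1)] PiP by simp
  finally have dg: "det g * det P = det P'" by simp
  show ?thesis using gc ggi gig gs gB dg unfolding P_def P'_def by blast
qed

lemma det_permute_cols:
  fixes A :: "'k::field mat"
  assumes A: "A \<in> carrier_mat n n" and p: "p permutes {0..<n}"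
  shows "det (mat n n (\<lambda>(i,j). A $$ (i, p j))) = signof p * det A"
proof -
  have AT: "A\<^sup>T \<in> carrier_mat n n" using A by simp
  have "mat n n (\<lambda>(i,j). A $$ (i, p j)) = (mat n n (\<lambda>(i,j). A\<^sup>T $$ (p i, j)))\<^sup>T"
    using A p by (intro eq_matI, auto simp: permutes_in_image)
  hence "det (mat n n (\<lambda>(i,j). A $$ (i, p j))) = det ((mat n n (\<lambda>(i,j). A\<^sup>T $$ (p i, j)))\<^sup>T)"
    by simp
  also have "\<dots> = det (mat n n (\<lambda>(i,j). A\<^sup>T $$ (p i, j)))"
    using det_transpose[of "mat n n (\<lambda>(i,j). A\<^sup>T $$ (p i, j))" n] by simp
  also have "\<dots> = signof p * det A\<^sup>T" by (rule det_permute_rows[OF AT p])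
  also have "det A\<^sup>T = det A" by (rule det_transpose[OF A])
  finally show ?thesis .
qed


lemma hyp_perm:
  fixes B s :: "'k::field mat"
  assumes h: "hyp B s m e f lam" and p: "p permutes {..<m}"
  shows "hyp B s m (e \<circ> p) (f \<circ> p) (lam \<circ> p)" "det (mkP m (e \<circ> p) (f \<circ> p)) = det (mkP m e f)"
proof -
  have pin: "i < m \<Longrightarrow> p i < m" for i using permutes_in_image[OF p, of i] by simp
  have pinj: "p i = p j \<longleftrightarrow> i = j" for i j using permutes_inj[OF p] by (auto dest: injD)
  show "hyp B s m (e \<circ> p) (f \<circ> p) (lam \<circ> p)" using h pin pinj unfolding hyp_def by simp
  let ?n = "2*m"
  define rho where "rho = p \<circ> tauP m \<circ> p \<circ> tauP m"
  have p2: "p permutes {0..<?n}" by (rule permutes_subset[OF p], auto)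
  have pout: "j \<ge> m \<Longrightarrow> p j = j" for j using permutes_not_in[OF p, of j] by simp
  have rho: "rho permutes {0..<?n}" unfolding rho_def
    by (intro permutes_compose p2 tauP_permutes)
  have sr: "signof rho = (1::'k)"
  proof -
    let ?t = "tauP m"
    have pt: "p \<circ> ?t permutes {0..<?n}" by (rule permutes_compose[OF tauP_permutes p2])
    have ptp: "p \<circ> ?t \<circ> p permutes {0..<?n}" by (rule permutes_compose[OF p2 pt])
    have "signof rho = signof (p \<circ> ?t \<circ> p) * (signof ?t :: 'k)" unfolding rho_def
      by (rule signof_compose[OF ptp tauP_permutes])
    also have "signof (p \<circ> ?t \<circ> p) = signof (p \<circ> ?t) * (signof p :: 'k)"
      by (rule signof_compose[OF pt p2])
    also have "signof (p \<circ> ?t) = signof p * (signof ?t :: 'k)"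
      by (rule signof_compose[OF p2 tauP_permutes])
    finally have "signof rho = (signof p * signof p) * (signof ?t * (signof ?t :: 'k))" by (simp add: mult_ac)
    moreover have sq: "(signof q :: 'k) * signof q = 1" for q by (simp add: sign_def)
    ultimately show ?thesis by simp
  qed
  have rj: "rho j = (if j < m then p j else if j < ?n then p (j - m) + m else j)" for j
  proof -
    consider "j < m" | "m \<le> j" "j < ?n" | "?n \<le> j" by linarith
    thus ?thesis
    proof cases
      case 1 thus ?thesis unfolding rho_def tauP_def using pout[of "j + m"] pin[of j] by simp
    next
      case 2
      have "p (j - m) < m" using pin 2 by simp
      thus ?thesis unfolding rho_def tauP_def using 2 pout[of "p (j - m) + m"] by simp
    next
      case 3 thus ?thesis unfolding rho_def tauP_def using pout[of j] by simp
    qed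
  qed
  have "mkP m (e \<circ> p) (f \<circ> p) = mat ?n ?n (\<lambda>(a,j). mkP m e f $$ (a, rho j))"
  proof -
    have pin2: "i < m \<Longrightarrow> p i < 2*m" for i using pin[of i] by simp
    show ?thesis unfolding mkP_def by (intro eq_matI, auto simp: rj pin pin2)
  qed
  hence "det (mkP m (e \<circ> p) (f \<circ> p)) = signof rho * det (mkP m e f)"
    using det_permute_cols[OF mkP_carrier rho] by simp
  thus "det (mkP m (e \<circ> p) (f \<circ> p)) = det (mkP m e f)" using sr by simp
qed

lemma hyp_swap:
  fixes B s :: "'k::field mat"
  assumes h: "hyp B s m e f lam" and i: "i < m" and B: "B \<in> carrier_mat (2*m) (2*m)" and BT: "B\<^sup>T = B"
  shows "hyp B s m (e(i := f i)) (f(i := e i)) (lam(i := inverse (lam i)))"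
    "det (mkP m (e(i := f i)) (f(i := e i))) = - det (mkP m e f)"
proof -
  have H: "\<And>a. a < m \<Longrightarrow> e a \<in> carrier_vec (2*m) \<and> f a \<in> carrier_vec (2*m) \<and> s *\<^sub>v e a = lam a \<cdot>\<^sub>v e a
      \<and> s *\<^sub>v f a = inverse (lam a) \<cdot>\<^sub>v f a \<and> lam a \<noteq> 0" using h unfolding hyp_def by auto
  have R: "\<And>a b. a < m \<Longrightarrow> b < m \<Longrightarrow> bf B (e a) (e b) = 0 \<and> bf B (f a) (f b) = 0 \<and> bf B (e a) (f b) = (if a = b then 1 else 0)"
    using h unfolding hyp_def by auto
  have sym: "\<And>a b. a < m \<Longrightarrow> b < m \<Longrightarrow> bf B (f a) (e b) = bf B (e b) (f a)"
    using bf_sym[OF B BT] H by blast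
  show "hyp B s m (e(i := f i)) (f(i := e i)) (lam(i := inverse (lam i)))"
    unfolding hyp_def
  proof (rule conjI; intro allI impI)
    fix a assume a: "a < m"
    show "(e(i := f i)) a \<in> carrier_vec (2 * m) \<and> (f(i := e i)) a \<in> carrier_vec (2 * m) \<and>
          s *\<^sub>v (e(i := f i)) a = (lam(i := inverse (lam i))) a \<cdot>\<^sub>v (e(i := f i)) a \<and>
          s *\<^sub>v (f(i := e i)) a = inverse ((lam(i := inverse (lam i))) a) \<cdot>\<^sub>v (f(i := e i)) a \<and>
          (lam(i := inverse (lam i))) a \<noteq> 0"
      using H[OF a] H[OF i] by (cases "a = i", auto)
  next
    fix a b assume a: "a < m" and b: "b < m"
    show "bf B ((e(i := f i)) a) ((e(i := f i)) b) = 0 \<and> bf B ((f(i := e i)) a) ((f(i := e i)) b) = 0 \<and>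
          bf B ((e(i := f i)) a) ((f(i := e i)) b) = (if a = b then 1 else 0)"
      using R[OF a b] R[OF i b] R[OF a i] R[OF i i] R[OF b i] R[OF i a] sym[OF i b] sym[OF a i] sym[OF i i] a b i
      by (cases "a = i"; cases "b = i", auto)
  qed
  let ?n = "2*m"
  let ?t = "Transposition.transpose i (i + m)"
  have t: "?t permutes {0..<?n}" using i by (intro permutes_swap_id, auto)
  have st: "signof ?t = (-1::'k)" using i by (simp add: sign_swap_id)
  have "mkP m (e(i := f i)) (f(i := e i)) = mat ?n ?n (\<lambda>(a,j). mkP m e f $$ (a, ?t j))"
    unfolding mkP_def using i by (intro eq_matI, auto simp: Transposition.transpose_def)
  hence "det (mkP m (e(i := f i)) (f(i := e i))) = signof ?t * det (mkP m e f)"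
    using det_permute_cols[OF mkP_carrier t] by simp
  thus "det (mkP m (e(i := f i)) (f(i := e i))) = - det (mkP m e f)" using st by simp
qed

lemma hyp_neg:
  fixes B s :: "'k::field mat"
  assumes h: "hyp B s m e f lam" and s: "s \<in> carrier_mat (2*m) (2*m)"
  shows "hyp B (- s) m e f (\<lambda>i. - lam i)"
proof -
  have "(- s) *\<^sub>v v = (- c) \<cdot>\<^sub>v v" if "v \<in> carrier_vec (2*m)" "s *\<^sub>v v = c \<cdot>\<^sub>v v" for v c
  proof -
    have "(- s) *\<^sub>v v = - (s *\<^sub>v v)" using that s by (simp add: uminus_mult_mat_vec)
    also have "\<dots> = (- c) \<cdot>\<^sub>v v" unfolding that(2) using that(1) by (intro eq_vecI, auto)
    finally show ?thesis .
  qed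
  thus ?thesis using h unfolding hyp_def by (auto simp: inverse_minus_eq)
qed

lemma hyp_swapset:
  fixes B s :: "'k::field mat"
  assumes h: "hyp B s m e f lam" and T: "T \<subseteq> {..<m}" and B: "B \<in> carrier_mat (2*m) (2*m)" and BT: "B\<^sup>T = B"
  shows "\<exists>e' f'. hyp B s m e' f' (\<lambda>i. if i \<in> T then inverse (lam i) else lam i) \<and>
           det (mkP m e' f') = (-1) ^ card T * det (mkP m e f)"
proof -
  have "finite T" using T finite_subset by blast
  thus ?thesis using T
  proof (induct T rule: finite_induct)
    case empty
    show ?case using h by (intro exI[of _ e] exI[of _ f], simp)
  next
    case (insert x F)
    then obtain e1 f1 where h1: "hyp B s m e1 f1 (\<lambda>i. if i \<in> F then inverse (lam i) else lam i)"
      and d1: "det (mkP m e1 f1) = (-1) ^ card F * det (mkP m e f)" by auto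
    have x: "x < m" using insert by auto
    note sw = hyp_swap[OF h1 x B BT]
    have eqf: "(\<lambda>i. if i \<in> F then inverse (lam i) else lam i)(x := inverse (if x \<in> F then inverse (lam x) else lam x))
        = (\<lambda>i. if i \<in> insert x F then inverse (lam i) else lam i)" using insert(2) by (intro ext, auto)
    have A: "hyp B s m (e1(x := f1 x)) (f1(x := e1 x)) (\<lambda>i. if i \<in> insert x F then inverse (lam i) else lam i)"
      by (rule sw(1)[unfolded eqf])
    have D: "det (mkP m (e1(x := f1 x)) (f1(x := e1 x))) = (-1) ^ card (insert x F) * det (mkP m e f)"
      using sw(2) d1 insert(1,2) by simp
    show ?case using A D by blast
  qed
qed

lemma hyp_similar:
  fixes B s :: "'k::field mat"
  assumes h: "hyp B s m e f lam" and B: "B \<in> carrier_mat (2*m) (2*m)" and BT: "B\<^sup>T = B"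
    and s: "s \<in> carrier_mat (2*m) (2*m)"
  shows "similar_mat s (Dm m lam)"
proof -
  let ?n = "2*m" let ?P = "mkP m e f" let ?Pi = "Pinv B m e f"
  note PiP = hyp_Pinv[OF h B BT]
  have "s = s * (?P * ?Pi)" using PiP s by simp
  also have "\<dots> = (s * ?P) * ?Pi" using s B by (simp add: assoc_mult_mat[of _ ?n ?n _ ?n _ ?n])
  also have "\<dots> = ?P * Dm m lam * ?Pi" unfolding hyp_sP[OF h s] ..
  finally have "s = ?P * Dm m lam * ?Pi" .
  thus ?thesis using PiP s B by (intro similar_matI[of _ _ _ _ ?n], auto)
qed

lemma hyp_count:
  fixes B s :: "'k::field mat"
  assumes h: "hyp B s m e f lam" and B: "B \<in> carrier_mat (2*m) (2*m)" and BT: "B\<^sup>T = B"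
    and s: "s \<in> carrier_mat (2*m) (2*m)" and ninv: "\<And>i. i < m \<Longrightarrow> inverse (lam i) \<noteq> mu"
  shows "eigsp_dim s mu = card {i. i < m \<and> lam i = mu}"
proof -
  have dg: "diagonal_mat (Dm m lam)" unfolding diagonal_mat_def Dm_def by auto
  have "eigsp_dim s mu = card {j. j < 2*m \<and> Dm m lam $$ (j,j) = mu}"
    by (rule eigsp_dim_diag_similar[OF hyp_similar[OF h B BT s] Dm_carrier dg])
  also have "{j. j < 2*m \<and> Dm m lam $$ (j,j) = mu} = {i. i < m \<and> lam i = mu}"
    unfolding set_eq_iff mem_Collect_eq
  proof (intro allI)
    fix j
    show "(j < 2*m \<and> Dm m lam $$ (j,j) = mu) \<longleftrightarrow> (j < m \<and> lam j = mu)"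
    proof (cases "j < m")
      case True thus ?thesis by (simp add: Dm_def dv_def)
    next
      case False
      have "j < 2*m \<Longrightarrow> inverse (lam (j - m)) \<noteq> mu" using ninv[of "j - m"] False by simp
      thus ?thesis using False by (auto simp: Dm_def dv_def)
    qed
  qed
  finally show ?thesis .
qed


lemma qform2:
  fixes A :: "'k::field mat"
  assumes A: "A \<in> carrier_mat N N" and v: "v \<in> carrier_vec N"
  shows "bf (A + A\<^sup>T) v v = 2 * qform A v"
proof -
  have AT: "A\<^sup>T \<in> carrier_mat N N" using A by simp
  have e2: "v \<bullet> (A\<^sup>T *\<^sub>v v) = v \<bullet> (A *\<^sub>v v)"
    using transpose_vec_mult_scalar[OF A v v] comm_scalar_prod[of v N "A\<^sup>T *\<^sub>v v"] AT v by auto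
  have "bf (A + A\<^sup>T) v v = v \<bullet> (A *\<^sub>v v) + v \<bullet> (A\<^sup>T *\<^sub>v v)"
    unfolding bf_def using A AT v
    by (simp add: add_mult_distrib_mat_vec[OF A AT v] scalar_prod_add_distrib[of v N])
  thus ?thesis unfolding e2 qform_def by (simp only: mult_2)
qed

locale mctx =
  fixes N m :: nat and A :: "'k::field mat" and Dl :: "'k poly" and S :: "'k set"
  assumes two: "(2::'k) \<noteq> 0" and Nm: "N = 2*m" and A: "A \<in> carrier_mat N N"
    and nondeg: "nondegenerate_qf N A" and degD: "degree Dl = N" and Npos: "N \<ge> 2"
    and negsym: "\<And>l. l \<noteq> 0 \<Longrightarrow> mult_root Dl (-l) = mult_root Dl l"
    and S0: "\<And>mu. mu \<in> S \<Longrightarrow> mu \<noteq> 0 \<and> mu \<noteq> 1 \<and> mu \<noteq> -1"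
    and S1: "\<And>mu. mu \<noteq> 0 \<Longrightarrow> mu \<noteq> 1 \<Longrightarrow> mu \<noteq> -1 \<Longrightarrow> (mu \<in> S \<longleftrightarrow> inverse mu \<notin> S)"
    and S2: "\<And>mu. mu \<in> S \<Longrightarrow> mu * mu \<noteq> -1 \<Longrightarrow> -mu \<in> S"
begin

definition "B = A + A\<^sup>T"

lemma B: "B \<in> carrier_mat N N" unfolding B_def using A by simp
lemma B2: "B \<in> carrier_mat (2*m) (2*m)" using B Nm by simp
lemma BT: "B\<^sup>T = B" unfolding B_def using A by (intro eq_matI, auto)

lemma SO_carrier: "g \<in> SO_Q N A \<Longrightarrow> g \<in> carrier_mat N N" unfolding SO_Q_def by auto

lemma SO_bf:
  assumes g: "g \<in> SO_Q N A" and x: "x \<in> carrier_vec N" and y: "y \<in> carrier_vec N"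
  shows "bf B (g *\<^sub>v x) (g *\<^sub>v y) = bf B x y"
proof -
  have gc: "g \<in> carrier_mat N N" and q: "\<And>v. v \<in> carrier_vec N \<Longrightarrow> qform A (g *\<^sub>v v) = qform A v"
    using g unfolding SO_Q_def by auto
  have "bf B (g *\<^sub>v x) (g *\<^sub>v y) = polar_form A (g *\<^sub>v x) (g *\<^sub>v y)"
    unfolding B_def using polar_bf[OF A, of "g *\<^sub>v x" "g *\<^sub>v y"] gc x y by simp
  also have "\<dots> = polar_form A x y" unfolding polar_form_def
    using q[of "x + y"] q[OF x] q[OF y] gc x y by (simp add: mult_add_distrib_mat_vec[OF gc x y])
  also have "\<dots> = bf B x y" unfolding B_def by (rule polar_bf[OF A x y])
  finally show ?thesis .
qed

lemma bf_nondeg: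
  assumes x: "x \<in> carrier_vec N" and h: "\<And>y. y \<in> carrier_vec N \<Longrightarrow> bf B x y = 0"
  shows "x = 0\<^sub>v N"
  using nondeg h polar_bf[OF A x] x unfolding nondegenerate_qf_def B_def by auto

definition orth :: "'k mat \<Rightarrow> bool" where
  "orth g \<longleftrightarrow> g \<in> carrier_mat N N \<and> g\<^sup>T * B * g = B"

lemma orth_bf:
  assumes g: "orth g" and v: "v \<in> carrier_vec N"
  shows "bf B (g *\<^sub>v v) (g *\<^sub>v v) = bf B v v"
proof -
  have gc: "g \<in> carrier_mat N N" and gB: "g\<^sup>T * B * g = B" using g unfolding orth_def by auto
  have "bf B (g *\<^sub>v v) (g *\<^sub>v v) = (B *\<^sub>v (g *\<^sub>v v)) \<bullet> (g *\<^sub>v v)"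
    unfolding bf_def using gc B v by (intro comm_scalar_prod[of _ N], auto)
  also have "\<dots> = (g\<^sup>T *\<^sub>v (B *\<^sub>v (g *\<^sub>v v))) \<bullet> v"
    using transpose_vec_mult_scalar[OF gc v, of "B *\<^sub>v (g *\<^sub>v v)"] gc B v by simp
  also have "g\<^sup>T *\<^sub>v (B *\<^sub>v (g *\<^sub>v v)) = (g\<^sup>T * B * g) *\<^sub>v v"
    using gc B v by (simp add: assoc_mult_mat_vec[of _ N N _ N])
  also have "\<dots> = B *\<^sub>v v" unfolding gB ..
  also have "(B *\<^sub>v v) \<bullet> v = bf B v v" unfolding bf_def using B v by (intro comm_scalar_prod[of _ N], auto)
  finally show ?thesis .
qed

lemma orth_qform:
  assumes g: "orth g" and v: "v \<in> carrier_vec N"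
  shows "qform A (g *\<^sub>v v) = qform A v"
proof -
  have gc: "g \<in> carrier_mat N N" using g unfolding orth_def by auto
  have "2 * qform A (g *\<^sub>v v) = 2 * qform A v"
    using orth_bf[OF g v] qform2[OF A v] qform2[OF A, of "g *\<^sub>v v"] gc v unfolding B_def by simp
  thus ?thesis using two by simp
qed

lemma orth_SO: "orth g \<Longrightarrow> det g = 1 \<Longrightarrow> g \<in> SO_Q N A"
  unfolding SO_Q_def using orth_qform by (auto simp: orth_def)

lemma SO_mult: assumes "g \<in> SO_Q N A" "h \<in> SO_Q N A" shows "g * h \<in> SO_Q N A"
proof -
  have c: "g \<in> carrier_mat N N" "h \<in> carrier_mat N N" using assms unfolding SO_Q_def by auto
  have "det (g * h) = 1" using det_mult[OF c] assms unfolding SO_Q_def by simp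
  moreover have "qform A ((g * h) *\<^sub>v v) = qform A v" if v: "v \<in> carrier_vec N" for v
    using assms c v unfolding SO_Q_def by (simp add: assoc_mult_mat_vec[of _ N N _ N])
  ultimately show ?thesis using c unfolding SO_Q_def by auto
qed

lemma SO_inv: assumes g: "g \<in> SO_Q N A" and gi: "gi \<in> carrier_mat N N" and "g * gi = 1\<^sub>m N"
  shows "gi \<in> SO_Q N A"
proof -
  have c: "g \<in> carrier_mat N N" using g unfolding SO_Q_def by auto
  have "det g * det gi = 1" using det_mult[OF c gi] assms(3) by simp
  hence "det gi = 1" using g unfolding SO_Q_def by simp
  moreover have "qform A (gi *\<^sub>v v) = qform A v" if v: "v \<in> carrier_vec N" for v
  proof -
    have "qform A (gi *\<^sub>v v) = qform A (g *\<^sub>v (gi *\<^sub>v v))" using g gi v unfolding SO_Q_def by simp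
    also have "g *\<^sub>v (gi *\<^sub>v v) = v" using c gi v assms(3) by (simp add: assoc_mult_mat_vec[symmetric, of _ N N _ N])
    finally show ?thesis .
  qed
  ultimately show ?thesis using gi unfolding SO_Q_def by auto
qed

lemma one_SO: "1\<^sub>m N \<in> SO_Q N A" unfolding SO_Q_def by simp

lemma self_in_class: "s \<in> carrier_mat N N \<Longrightarrow> s \<in> conj_class N A s"
  unfolding conj_class_def using one_SO by (intro CollectI exI[of _ "1\<^sub>m N"], auto)

lemma class_sub:
  assumes a: "a \<in> SO_Q N A" and ai: "ai \<in> carrier_mat N N" and aai: "a * ai = 1\<^sub>m N" "ai * a = 1\<^sub>m N"
    and t: "t \<in> carrier_mat N N" and t': "t' = a * t * ai"
  shows "conj_class N A t' \<subseteq> conj_class N A t"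
proof
  fix x assume "x \<in> conj_class N A t'"
  then obtain g h where x: "x = g * t' * h" and g: "g \<in> SO_Q N A" and h: "h \<in> carrier_mat N N"
    and gh: "g * h = 1\<^sub>m N" "h * g = 1\<^sub>m N" unfolding conj_class_def by auto
  have gc: "g \<in> carrier_mat N N" and ac: "a \<in> carrier_mat N N" using g a unfolding SO_Q_def by auto
  note as = assoc_mult_mat[of _ N N _ N _ N]
  have "x = (g * a) * t * (ai * h)" unfolding x t' using gc ac ai h t by (simp add: as)
  moreover have "g * a \<in> SO_Q N A" by (rule SO_mult[OF g a])
  moreover have "ai * h \<in> carrier_mat N N" using ai h by simp
  moreover have "(g * a) * (ai * h) = 1\<^sub>m N"
  proof -
    have "(g * a) * (ai * h) = g * (a * ai) * h" using gc ac ai h by (simp add: as)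
    thus ?thesis using aai gh gc by simp
  qed
  moreover have "(ai * h) * (g * a) = 1\<^sub>m N"
  proof -
    have "(ai * h) * (g * a) = ai * (h * g) * a" using gc ac ai h by (simp add: as)
    thus ?thesis using aai gh ai by simp
  qed
  ultimately show "x \<in> conj_class N A t" unfolding conj_class_def by blast
qed

lemma class_eq:
  assumes a: "a \<in> SO_Q N A" and ai: "ai \<in> carrier_mat N N" and aai: "a * ai = 1\<^sub>m N" "ai * a = 1\<^sub>m N"
    and t: "t \<in> carrier_mat N N" and t': "t' \<in> carrier_mat N N" and at: "a * t = t' * a"
  shows "conj_class N A t' = conj_class N A t"
proof
  have ac: "a \<in> carrier_mat N N" using a unfolding SO_Q_def by auto
  note as = assoc_mult_mat[of _ N N _ N _ N]
  have e1: "t' = a * t * ai"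
  proof -
    have "t' = t' * (a * ai)" using aai t' by simp
    also have "\<dots> = (a * t) * ai" unfolding at using t' ac ai by (simp add: as)
    finally show ?thesis .
  qed
  have e2: "t = ai * t' * a"
  proof -
    have "t = (ai * a) * t" using aai t by simp
    also have "\<dots> = ai * (a * t)" using t ac ai by (simp add: as)
    also have "\<dots> = ai * t' * a" unfolding at using t' ac ai by (simp add: as)
    finally show ?thesis .
  qed
  show "conj_class N A t' \<subseteq> conj_class N A t" by (rule class_sub[OF a ai aai t e1])
  show "conj_class N A t \<subseteq> conj_class N A t'"
    by (rule class_sub[OF SO_inv[OF a ai aai(1)] ac aai(2) aai(1) t' e2])
qed

lemma class_neg:
  assumes s: "s \<in> carrier_mat N N"
  shows "(\<lambda>c. - c) ` conj_class N A s = conj_class N A (- s)"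
proof -
  have key: "- (g * s * h) = g * (- s) * h" if "g \<in> carrier_mat N N" "h \<in> carrier_mat N N" for g h
    using that s by (simp add: uminus_mult_right_mat uminus_mult_left_mat)
  show ?thesis
  proof
    show "(\<lambda>c. - c) ` conj_class N A s \<subseteq> conj_class N A (- s)"
    proof
      fix x assume "x \<in> (\<lambda>c. - c) ` conj_class N A s"
      then obtain y where xy: "x = - y" and "y \<in> conj_class N A s" by blast
      then obtain g h where y: "y = g * s * h" and g: "g \<in> SO_Q N A" and h: "h \<in> carrier_mat N N"
        and gh: "g * h = 1\<^sub>m N" "h * g = 1\<^sub>m N" unfolding conj_class_def by auto
      have "x = g * (- s) * h" unfolding xy y by (rule key[OF SO_carrier[OF g] h])
      thus "x \<in> conj_class N A (- s)" unfolding conj_class_def using g h gh by blast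
    qed
    show "conj_class N A (- s) \<subseteq> (\<lambda>c. - c) ` conj_class N A s"
    proof
      fix x assume "x \<in> conj_class N A (- s)"
      then obtain g h where x: "x = g * (- s) * h" and g: "g \<in> SO_Q N A" and h: "h \<in> carrier_mat N N"
        and gh: "g * h = 1\<^sub>m N" "h * g = 1\<^sub>m N" unfolding conj_class_def by auto
      have "x = - (g * s * h)" unfolding x using key[OF SO_carrier[OF g] h] by simp
      moreover have "g * s * h \<in> conj_class N A s" unfolding conj_class_def using g h gh by blast
      ultimately show "x \<in> (\<lambda>c. - c) ` conj_class N A s" by blast
    qed
  qed
qed

end

locale mctx2 = mctx +
  assumes mr1: "mult_root Dl 1 = 0" and mrm1: "mult_root Dl (-1) = 0"
begin

lemma detB: "det B \<noteq> 0"
proof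
  assume "det B = 0"
  then obtain v where v: "v \<in> carrier_vec N" "v \<noteq> 0\<^sub>v N" "B *\<^sub>v v = 0\<^sub>v N"
    using det_0_iff_vec_prod_zero_field[OF B] by blast
  have "bf B v y = 0" if y: "y \<in> carrier_vec N" for y
  proof -
    have "bf B v y = (B\<^sup>T *\<^sub>v v) \<bullet> y" unfolding bf_def using transpose_vec_mult_scalar[OF B y v(1)] ..
    also have "\<dots> = 0" unfolding BT v(3) using y by simp
    finally show ?thesis .
  qed
  hence "v = 0\<^sub>v N" by (rule bf_nondeg[OF v(1)])
  with v(2) show False by simp
qed

lemma orth_det: assumes "orth g" shows "det g = 1 \<or> det g = -1"
proof -
  have gc: "g \<in> carrier_mat N N" and gB: "g\<^sup>T * B * g = B" using assms unfolding orth_def by auto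
  have "det (g\<^sup>T * B * g) = det g * det B * det g"
    using gc B by (simp add: det_mult[of _ N] det_transpose)
  hence "det B * (det g * det g - 1) = 0" unfolding gB by (simp add: algebra_simps)
  hence "det g * det g = 1" using detB by simp
  hence "(det g - 1) * (det g + 1) = 0" by (simp add: algebra_simps)
  thus ?thesis by (auto simp: eq_neg_iff_add_eq_0)
qed

lemma R_facts:
  assumes "s \<in> R_Delta N A Dl"
  shows "s \<in> SO_Q N A" "semisimple s" "Delta_of s = Dl" "s \<in> carrier_mat N N"
  using assms unfolding R_Delta_def SO_Q_def by auto

lemma eig_eq: assumes "s \<in> R_Delta N A Dl" "mu \<noteq> 0"
  shows "eigsp_dim s mu = mult_root Dl mu"
proof -
  have "degree (Delta_of s) \<noteq> 0" using R_facts(3)[OF assms(1)] degD Npos by simp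
  from Delta_of_mult_root[OF this assms(2)] R_facts(3)[OF assms(1)] show ?thesis by simp
qed

lemma data_of:
  assumes sR: "s \<in> R_Delta N A Dl"
  shows "\<exists>e f lam. hyp B s m e f lam \<and> (\<forall>i<m. lam i \<in> S)"
proof -
  note sf = R_facts[OF sR]
  obtain D0 where sim: "similar_mat s D0" and dg: "diagonal_mat D0" using sf(2) unfolding semisimple_def by blast
  from similar_matD[OF sim] obtain n Q Qi where c: "{s, D0, Q, Qi} \<subseteq> carrier_mat n n"
    and QQi: "Q * Qi = 1\<^sub>m n" and QiQ: "Qi * Q = 1\<^sub>m n" and sD: "s = Q * D0 * Qi" by blast
  have nN: "n = N" using c sf(4) by auto
  have cs: "D0 \<in> carrier_mat N N" "Q \<in> carrier_mat N N" "Qi \<in> carrier_mat N N" using c nN by auto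
  note as = assoc_mult_mat[of _ N N _ N _ N]
  have sQ: "s * Q = Q * D0"
  proof -
    have "s * Q = Q * D0 * (Qi * Q)" unfolding sD using cs by (simp add: as)
    thus ?thesis using QiQ nN cs by simp
  qed
  have detD0: "det D0 = 1"
  proof -
    have "det s = det Q * det D0 * det Qi" unfolding sD using cs by (simp add: det_mult[of _ N])
    also have "\<dots> = det D0 * (det Q * det Qi)" by (simp add: mult_ac)
    also have "det Q * det Qi = 1" using det_mult[OF cs(2,3)] QQi nN by simp
    finally show ?thesis using sf(1) unfolding SO_Q_def by simp
  qed
  have ut: "upper_triangular D0" using dg cs(1) unfolding upper_triangular_def diagonal_mat_def by auto
  have pl: "prod_list (diag_mat D0) = 1" using det_upper_triangular[OF ut cs(1)] detD0 by simp
  have eig1: "eigsp_dim s x = card {j. j < N \<and> D0 $$ (j,j) = x}" for x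
    by (rule eigsp_dim_diag_similar[OF sim cs(1) dg])
  have d0: "D0 $$ (j,j) \<noteq> 0 \<and> D0 $$ (j,j) \<noteq> 1 \<and> D0 $$ (j,j) \<noteq> -1" if j: "j < N" for j
  proof (intro conjI)
    show "D0 $$ (j,j) \<noteq> 0"
    proof
      assume "D0 $$ (j,j) = 0"
      hence "0 \<in> set (diag_mat D0)" unfolding diag_mat_def using j cs(1) by force
      hence "prod_list (diag_mat D0) = 0" by (simp add: prod_list_zero_iff)
      with pl show False by simp
    qed
    show "D0 $$ (j,j) \<noteq> 1"
    proof
      assume a: "D0 $$ (j,j) = 1"
      have "card {j. j < N \<and> D0 $$ (j,j) = 1} = 0" using eig1[of 1] eig_eq[OF sR, of 1] mr1 by simp
      moreover have "j \<in> {j. j < N \<and> D0 $$ (j,j) = 1}" using a j by simp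
      ultimately show False by (auto simp: card_eq_0_iff)
    qed
    show "D0 $$ (j,j) \<noteq> -1"
    proof
      assume a: "D0 $$ (j,j) = -1"
      have "card {j. j < N \<and> D0 $$ (j,j) = -1} = 0" using eig1[of "-1"] eig_eq[OF sR, of "-1"] mrm1 by simp
      moreover have "j \<in> {j. j < N \<and> D0 $$ (j,j) = -1}" using a j by simp
      ultimately show False by (auto simp: card_eq_0_iff)
    qed
  qed
  interpret H: hsetup N m B s Q Qi D0 S
  proof (unfold_locales)
    show "N = 2*m" by (rule Nm)
    show "B \<in> carrier_mat N N" by (rule B)
    show "B\<^sup>T = B" by (rule BT)
    show "s \<in> carrier_mat N N" by (rule sf(4))
    show "Q \<in> carrier_mat N N" "Qi \<in> carrier_mat N N" "D0 \<in> carrier_mat N N" using cs by auto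
    show "Q * Qi = 1\<^sub>m N" "Qi * Q = 1\<^sub>m N" using QQi QiQ nN by auto
    show "s * Q = Q * D0" by (rule sQ)
    show "diagonal_mat D0" by (rule dg)
    show "\<And>x y. x \<in> carrier_vec N \<Longrightarrow> y \<in> carrier_vec N \<Longrightarrow> bf B (s *\<^sub>v x) (s *\<^sub>v y) = bf B x y"
      by (rule SO_bf[OF sf(1)])
    show "\<And>x. x \<in> carrier_vec N \<Longrightarrow> (\<And>y. y \<in> carrier_vec N \<Longrightarrow> bf B x y = 0) \<Longrightarrow> x = 0\<^sub>v N"
      by (rule bf_nondeg)
    show "\<And>j. j < N \<Longrightarrow> D0 $$ (j, j) \<noteq> 0 \<and> D0 $$ (j, j) \<noteq> 1 \<and> D0 $$ (j, j) \<noteq> - 1" by (rule d0)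
    show "\<And>mu. mu \<noteq> 0 \<Longrightarrow> mu \<noteq> 1 \<Longrightarrow> mu \<noteq> - 1 \<Longrightarrow> (mu \<in> S) = (inverse mu \<notin> S)" by (rule S1)
  qed
  obtain e f lam where "H.hdat m e f lam" using H.hdat_exists[of m] by auto
  hence "hyp B s m e f lam \<and> (\<forall>i<m. lam i \<in> S)" unfolding H.hdat_def hyp_def using Nm by auto
  thus ?thesis by blast
qed

lemma notinv: assumes "mu \<in> S" shows "inverse mu \<notin> S"
  using S1[of mu] S0[OF assms] assms by auto

lemma count_R:
  assumes sR: "s \<in> R_Delta N A Dl" and h: "hyp B s m e f lam" and lS: "\<forall>i<m. lam i \<in> S" and mu: "mu \<in> S"
  shows "card {i. i < m \<and> lam i = mu} = mult_root Dl mu"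
proof -
  have "eigsp_dim s mu = card {i. i < m \<and> lam i = mu}"
    using hyp_count[OF h B2 BT, of mu] R_facts(4)[OF sR] Nm notinv lS mu by auto
  thus ?thesis using eig_eq[OF sR] S0[OF mu] by simp
qed

end

lemma count_mset_map_upt:
  "count (mset (map lam [0..<m])) mu = card {i. i < m \<and> lam i = mu}"
proof (induct m)
  case 0 thus ?case by simp
next
  case (Suc m)
  have e: "{i. i < Suc m \<and> lam i = mu} = (if lam m = mu then insert m {i. i < m \<and> lam i = mu} else {i. i < m \<and> lam i = mu})"
    by (auto simp: less_Suc_eq)
  show ?case unfolding e using Suc by simp
qed

lemma size_filter_map_upt:
  "size (mset (filter P (map lam [0..<m]))) = card {i. i < m \<and> P (lam i)}"
proof (induct m)
  case 0 thus ?case by simp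
next
  case (Suc m)
  have e: "{i. i < Suc m \<and> P (lam i)} = (if P (lam m) then insert m {i. i < m \<and> P (lam i)} else {i. i < m \<and> P (lam i)})"
    by (auto simp: less_Suc_eq)
  show ?case unfolding e using Suc by simp
qed

lemma perm_match:
  fixes m :: nat
  assumes "\<And>mu. card {i. i < m \<and> lam i = mu} = card {i. i < m \<and> lam' i = mu}"
  shows "\<exists>p. p permutes {..<m} \<and> (\<forall>i<m. lam' (p i) = lam i)"
proof -
  have "mset (map lam [0..<m]) = mset (map lam' [0..<m])"
    by (rule multiset_eqI, simp only: count_mset_map_upt assms)
  then obtain p where p: "p permutes {..<length (map lam' [0..<m])}"
    and pl: "permute_list p (map lam' [0..<m]) = map lam [0..<m]" by (rule mset_eq_permutation)
  have p': "p permutes {..<m}" using p by simp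
  have "lam' (p i) = lam i" if i: "i < m" for i
  proof -
    have "permute_list p (map lam' [0..<m]) ! i = map lam [0..<m] ! i" using pl by simp
    moreover have "permute_list p (map lam' [0..<m]) ! i = map lam' [0..<m] ! p i"
      using p i by (simp add: permute_list_nth)
    moreover have "p i < m" using permutes_in_image[OF p' , of i] i by simp
    ultimately show ?thesis using i by simp
  qed
  thus ?thesis using p' by blast
qed

lemma even_invol:
  assumes "\<And>x. count M (phi x) = count M x" and "\<And>x. phi (phi x) = x" and "\<And>x. x \<in># M \<Longrightarrow> phi x \<noteq> x"
  shows "even (size M)"
  using assms
proof (induct "size M" arbitrary: M rule: less_induct)
  case less
  show ?case
  proof (cases "M = {#}")
    case True thus ?thesis by simp
  next
    case False
    then obtain x where x: "x \<in># M" by blast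
    have px: "phi x \<in># M" using less(2)[of x] x by (metis count_greater_zero_iff)
    have ne: "phi x \<noteq> x" using less(4)[OF x] .
    define M' where "M' = M - {#x, phi x#}"
    have sub: "{#x, phi x#} \<subseteq># M"
      using x px ne by (simp add: insert_subset_eq_iff in_diff_count)
    have "size {#x, phi x#} \<le> size M" by (rule size_mset_mono[OF sub])
    hence sz: "size M = size M' + 2" unfolding M'_def using sub
      by (simp add: size_Diff_submset)
    have inv': "count M' (phi y) = count M' y" for y
      unfolding M'_def using less(2)[of y] less(3)[of y] less(3)[of x] by auto
    have fix': "y \<in># M' \<Longrightarrow> phi y \<noteq> y" for y
      unfolding M'_def using less(4) by (meson in_diffD)
    have "even (size M')"
      by (rule less(1)[of M'], insert sz inv' less(3) fix', auto)
    thus ?thesis using sz by simp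
  qed
qed

context mctx2 begin

lemma counts_R:
  assumes sR: "s \<in> R_Delta N A Dl" and h: "hyp B s m e f lam" and lS: "\<forall>i<m. lam i \<in> S"
  shows "card {i. i < m \<and> lam i = mu} = (if mu \<in> S then mult_root Dl mu else 0)"
proof (cases "mu \<in> S")
  case True thus ?thesis using count_R[OF sR h lS True] by simp
next
  case False
  hence "{i. i < m \<and> lam i = mu} = {}" using lS by auto
  thus ?thesis using False by simp
qed

lemma conj_data:
  assumes h: "hyp B s m e f lam" and h': "hyp B t m e' f' lam'"
    and s: "s \<in> carrier_mat N N" and t: "t \<in> carrier_mat N N"
    and cnt: "\<And>mu. card {i. i < m \<and> lam i = mu} = card {i. i < m \<and> lam' i = mu}"
  shows "\<exists>g gi. g \<in> carrier_mat N N \<and> gi \<in> carrier_mat N N \<and> g * gi = 1\<^sub>m N \<and> gi * g = 1\<^sub>m N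
     \<and> g * s = t * g \<and> orth g \<and> det g * det (mkP m e f) = det (mkP m e' f')"
proof -
  obtain p where p: "p permutes {..<m}" and pl: "\<forall>i<m. lam' (p i) = lam i" using perm_match[OF cnt] by blast
  note hp = hyp_perm[OF h' p]
  have "\<exists>g gi. g \<in> carrier_mat (2*m) (2*m) \<and> gi \<in> carrier_mat (2*m) (2*m) \<and> g * gi = 1\<^sub>m (2*m) \<and> gi * g = 1\<^sub>m (2*m)
     \<and> g * s = t * g \<and> g\<^sup>T * B * g = B \<and> det g * det (mkP m e f) = det (mkP m (e' \<circ> p) (f' \<circ> p))"
    by (rule hyp_conj[OF h hp(1) _ B2 BT], insert pl s t Nm, auto)
  thus ?thesis unfolding hp(2) orth_def using Nm by auto
qed

lemma conj_R:
  assumes sR: "s \<in> R_Delta N A Dl" and tR: "t \<in> R_Delta N A Dl"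
  shows "\<exists>g gi. g \<in> carrier_mat N N \<and> gi \<in> carrier_mat N N \<and> g * gi = 1\<^sub>m N \<and> gi * g = 1\<^sub>m N
     \<and> g * s = t * g \<and> orth g"
proof -
  obtain e f lam where h: "hyp B s m e f lam" and lS: "\<forall>i<m. lam i \<in> S" using data_of[OF sR] by blast
  obtain e' f' lam' where h': "hyp B t m e' f' lam'" and lS': "\<forall>i<m. lam' i \<in> S" using data_of[OF tR] by blast
  show ?thesis using conj_data[OF h h' R_facts(4)[OF sR] R_facts(4)[OF tR]]
    counts_R[OF sR h lS] counts_R[OF tR h' lS'] by auto
qed

lemma detP_nonzero:
  assumes h: "hyp B s m e f lam"
  shows "det (mkP m e f) \<noteq> 0"
proof
  assume d: "det (mkP m e f) = 0"
  have PT: "(mkP m e f)\<^sup>T \<in> carrier_mat (2*m) (2*m)" by simp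
  have "det ((mkP m e f)\<^sup>T * B * mkP m e f) = det ((mkP m e f)\<^sup>T * B) * det (mkP m e f)"
    using PT B2 by (intro det_mult[of _ "2*m"], auto)
  also have "det ((mkP m e f)\<^sup>T * B) = det ((mkP m e f)\<^sup>T) * det B" by (rule det_mult[OF PT B2])
  also have "det ((mkP m e f)\<^sup>T) = det (mkP m e f)" using det_transpose[of "mkP m e f" "2*m"] by simp
  finally have "det ((mkP m e f)\<^sup>T * B * mkP m e f) = det (mkP m e f) * det B * det (mkP m e f)" .
  hence "det (Jm m :: 'a mat) = 0" unfolding hyp_PtBP[OF h B2 BT] d by simp
  moreover have "det (Jm m :: 'a mat) * det (Jm m :: 'a mat) = 1"
  proof -
    have J2: "(Jm m :: 'a mat) * Jm m = 1\<^sub>m (2*m)" by (rule Jm_sq)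
    have "det ((Jm m :: 'a mat) * Jm m) = det (Jm m :: 'a mat) * det (Jm m :: 'a mat)"
      by (rule det_mult[OF Jm_carrier Jm_carrier])
    thus ?thesis using J2 by simp
  qed
  ultimately show False by simp
qed

lemma parity:
  assumes sR: "s \<in> R_Delta N A Dl" and h: "hyp B s m e f lam" and lS: "\<forall>i<m. lam i \<in> S"
  shows "even (card {i. i < m \<and> lam i * lam i \<noteq> -1})"
proof -
  define M where "M = mset (filter (\<lambda>x. x * x \<noteq> -1) (map lam [0..<m]))"
  have cM: "count M mu = (if mu * mu \<noteq> -1 then card {i. i < m \<and> lam i = mu} else 0)" for mu
    unfolding M_def mset_filter count_filter_mset count_mset_map_upt by simp
  have szM: "size M = card {i. i < m \<and> lam i * lam i \<noteq> -1}"
    unfolding M_def by (rule size_filter_map_upt)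
  have cnt: "card {i. i < m \<and> lam i = mu} = (if mu \<in> S then mult_root Dl mu else 0)" for mu
    by (rule counts_R[OF sR h lS])
  have inv: "count M (- x) = count M x" for x
  proof (cases "x * x \<noteq> -1")
    case False thus ?thesis unfolding cM by simp
  next
    case True
    have "(- x \<in> S) = (x \<in> S)" using S2[of x] S2[of "-x"] True by auto
    moreover have "x \<in> S \<Longrightarrow> mult_root Dl (-x) = mult_root Dl x" using negsym S0 by blast
    ultimately show ?thesis unfolding cM cnt using True by auto
  qed
  have fx: "- x \<noteq> x" if "x \<in># M" for x
  proof -
    have "x \<in> lam ` {..<m}" using that unfolding M_def by auto
    hence "x \<noteq> 0" using lS S0 by auto
    show ?thesis
    proof
      assume a: "- x = x"
      have "2 * x = x + x" by (rule mult_2)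
      also have "\<dots> = - x + x" using a by simp
      also have "\<dots> = 0" by simp
      finally have "2 * x = 0" .
      thus False using two \<open>x \<noteq> 0\<close> by simp
    qed
  qed
  have "even (size M)" by (rule even_invol[of M uminus], insert inv fx, auto)
  thus ?thesis unfolding szM .
qed

end

lemma Dm_diag: "diagonal_mat (Dm m lam)" unfolding diagonal_mat_def Dm_def by auto

lemma card_split_m: "card {i. i < (m::nat) \<and> P i} + card {i. i < m \<and> \<not> P i} = m"
proof -
  have "{i. i < m \<and> P i} \<union> {i. i < m \<and> \<not> P i} = {..<m}" by auto
  moreover have "card ({i. i < m \<and> P i} \<union> {i. i < m \<and> \<not> P i}) = card {i. i < m \<and> P i} + card {i. i < m \<and> \<not> P i}"
    by (rule card_Un_disjoint, auto)
  ultimately show ?thesis by simp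
qed

context mctx2 begin

lemma sign_R:
  assumes sR: "s \<in> R_Delta N A Dl"
  shows "\<exists>g gi. g \<in> carrier_mat N N \<and> gi \<in> carrier_mat N N \<and> g * gi = 1\<^sub>m N \<and> gi * g = 1\<^sub>m N
     \<and> g * s = (- s) * g \<and> orth g \<and> det g = (-1) ^ m"
proof -
  obtain e f lam where h: "hyp B s m e f lam" and lS: "\<forall>i<m. lam i \<in> S" using data_of[OF sR] by blast
  have sc: "s \<in> carrier_mat N N" by (rule R_facts(4)[OF sR])
  have s2: "s \<in> carrier_mat (2*m) (2*m)" using sc Nm by simp
  have nsc: "- s \<in> carrier_mat N N" using sc by simp
  have ns2: "- s \<in> carrier_mat (2*m) (2*m)" using s2 by simp
  note hn = hyp_neg[OF h s2]
  define T where "T = {i. i < m \<and> - lam i \<notin> S}"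
  define lam2 where "lam2 = (\<lambda>i. if i \<in> T then inverse (- lam i) else - lam i)"
  have Tsub: "T \<subseteq> {..<m}" unfolding T_def by auto
  obtain e2 f2 where h2: "hyp B (- s) m e2 f2 lam2"
    and d2: "det (mkP m e2 f2) = (-1) ^ card T * det (mkP m e f)"
    using hyp_swapset[OF hn Tsub B2 BT] unfolding lam2_def by blast
  have lS2: "\<forall>i<m. lam2 i \<in> S"
  proof (intro allI impI)
    fix i assume i: "i < m"
    have l: "lam i \<noteq> 0" "lam i \<noteq> 1" "lam i \<noteq> -1" using S0 lS i by auto
    have nl: "- lam i \<noteq> 0" "- lam i \<noteq> 1" "- lam i \<noteq> -1" using l by (auto simp: minus_equation_iff)
    show "lam2 i \<in> S"
    proof (cases "i \<in> T")
      case True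
      hence "- lam i \<notin> S" unfolding T_def by simp
      thus ?thesis using S1[OF nl] True unfolding lam2_def by simp
    next
      case False
      thus ?thesis using i unfolding lam2_def T_def by simp
    qed
  qed
  have dnl: "Dm m (\<lambda>i. - lam i) $$ (j,j) = - (Dm m lam $$ (j,j))" if "j < 2*m" for j
    using that unfolding Dm_def dv_def by (simp add: inverse_minus_eq)
  have cnt: "card {i. i < m \<and> lam i = mu} = card {i. i < m \<and> lam2 i = mu}" for mu
  proof (cases "mu \<in> S")
    case False
    have "{i. i < m \<and> lam i = mu} = {}" "{i. i < m \<and> lam2 i = mu} = {}" using lS lS2 False by auto
    thus ?thesis by (simp only:)
  next
    case True
    have mu0: "mu \<noteq> 0" using S0[OF True] by simp
    have ninv: "inverse (lam2 i) \<noteq> mu" if i: "i < m" for i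
    proof -
      have "inverse (lam2 i) \<notin> S" using notinv lS2 i by blast
      thus ?thesis using True by blast
    qed
    have "card {i. i < m \<and> lam2 i = mu} = eigsp_dim (- s) mu"
      using hyp_count[OF h2 B2 BT ns2 ninv] by simp
    also have "\<dots> = card {j. j < 2*m \<and> Dm m (\<lambda>i. - lam i) $$ (j,j) = mu}"
      by (rule eigsp_dim_diag_similar[OF hyp_similar[OF hn B2 BT ns2] Dm_carrier Dm_diag])
    also have "{j. j < 2*m \<and> Dm m (\<lambda>i. - lam i) $$ (j,j) = mu} = {j. j < 2*m \<and> Dm m lam $$ (j,j) = - mu}"
      using dnl by auto
    also have "card \<dots> = eigsp_dim s (- mu)"
      by (rule eigsp_dim_diag_similar[OF hyp_similar[OF h B2 BT s2] Dm_carrier Dm_diag, symmetric])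
    also have "\<dots> = mult_root Dl (- mu)" using eig_eq[OF sR] mu0 by simp
    also have "\<dots> = mult_root Dl mu" using negsym[OF mu0] .
    also have "\<dots> = card {i. i < m \<and> lam i = mu}" using count_R[OF sR h lS True] by simp
    finally show ?thesis by simp
  qed
  obtain g gi where g: "g \<in> carrier_mat N N" "gi \<in> carrier_mat N N" "g * gi = 1\<^sub>m N" "gi * g = 1\<^sub>m N"
    "g * s = (- s) * g" "orth g" and dg: "det g * det (mkP m e f) = det (mkP m e2 f2)"
    using conj_data[OF h h2 sc nsc cnt] by blast
  have dgT: "det g = (-1) ^ card T"
    using dg d2 detP_nonzero[OF h] by simp
  have Teq: "T = {i. i < m \<and> lam i * lam i = -1}"
  proof -
    have "(- lam i \<notin> S) = (lam i * lam i = -1)" if i: "i < m" for i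
    proof
      assume "- lam i \<notin> S" thus "lam i * lam i = -1" using S2 lS i by blast
    next
      assume a: "lam i * lam i = -1"
      have "lam i \<noteq> 0" using S0 lS i by auto
      hence "inverse (lam i) = - lam i" using inv_eq_neg_iff a by blast
      thus "- lam i \<notin> S" using notinv lS i by metis
    qed
    thus ?thesis unfolding T_def by auto
  qed
  have ev: "even (card {i. i < m \<and> lam i * lam i \<noteq> -1})" by (rule parity[OF sR h lS])
  have sm: "card T + card {i. i < m \<and> lam i * lam i \<noteq> -1} = m" unfolding Teq by (rule card_split_m)
  have "(-1::'a) ^ m = (-1) ^ card T * (-1) ^ card {i. i < m \<and> lam i * lam i \<noteq> -1}"
    by (simp only: power_add[symmetric] sm)
  also have "(-1::'a) ^ card {i. i < m \<and> lam i * lam i \<noteq> -1} = 1" using ev by simp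
  finally have "det g = (-1) ^ m" using dgT by simp
  thus ?thesis using g by blast
qed

end

context mctx2 begin

lemma orth_mult:
  assumes a: "orth a" and b: "orth b" shows "orth (a * b)"
proof -
  have ac: "a \<in> carrier_mat N N" and aB: "a\<^sup>T * B * a = B" and bc: "b \<in> carrier_mat N N" and bB: "b\<^sup>T * B * b = B"
    using a b unfolding orth_def by auto
  note as = assoc_mult_mat[of _ N N _ N _ N]
  have "(a * b)\<^sup>T * B * (a * b) = b\<^sup>T * (a\<^sup>T * B * a) * b"
    using ac bc B by (simp add: transpose_mult[OF ac bc] as)
  also have "\<dots> = B" unfolding aB bB ..
  finally show ?thesis unfolding orth_def using ac bc by simp
qed

lemma orth_inv:
  assumes g: "orth g" and gi: "gi \<in> carrier_mat N N" and ggi: "g * gi = 1\<^sub>m N"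
  shows "orth gi"
proof -
  have gc: "g \<in> carrier_mat N N" and gB: "g\<^sup>T * B * g = B" using g unfolding orth_def by auto
  note as = assoc_mult_mat[of _ N N _ N _ N]
  have "gi\<^sup>T * B * gi = gi\<^sup>T * (g\<^sup>T * B * g) * gi" unfolding gB ..
  also have "\<dots> = (g * gi)\<^sup>T * B * (g * gi)" using gc gi B by (simp add: transpose_mult[OF gc gi] as)
  also have "\<dots> = B" unfolding ggi using B by simp
  finally show ?thesis unfolding orth_def using gi by simp
qed

lemma neg_class_even:
  assumes sR: "s \<in> R_Delta N A Dl" and ev: "even m"
  shows "(\<lambda>c. - c) ` conj_class N A s = conj_class N A s"
proof -
  have sc: "s \<in> carrier_mat N N" by (rule R_facts(4)[OF sR])
  obtain g gi where g: "g \<in> carrier_mat N N" "gi \<in> carrier_mat N N" "g * gi = 1\<^sub>m N" "gi * g = 1\<^sub>m N"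
    "g * s = (- s) * g" "orth g" "det g = (-1) ^ m" using sign_R[OF sR] by blast
  have "det g = 1" using g(7) ev by simp
  hence gSO: "g \<in> SO_Q N A" by (rule orth_SO[OF g(6)])
  have "conj_class N A (- s) = conj_class N A s"
    by (rule class_eq[OF gSO g(2,3,4) sc _ g(5)], insert sc, simp)
  thus ?thesis using class_neg[OF sc] by simp
qed

lemma neg_class_odd:
  assumes sR: "s \<in> R_Delta N A Dl" and tR: "t \<in> R_Delta N A Dl" and od: "odd m"
    and ne: "conj_class N A s \<noteq> conj_class N A t"
  shows "conj_class N A t = (\<lambda>c. - c) ` conj_class N A s"
proof -
  have sc: "s \<in> carrier_mat N N" by (rule R_facts(4)[OF sR])
  have tc: "t \<in> carrier_mat N N" by (rule R_facts(4)[OF tR])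
  note as = assoc_mult_mat[of _ N N _ N _ N]
  obtain g gi where g: "g \<in> carrier_mat N N" "gi \<in> carrier_mat N N" "g * gi = 1\<^sub>m N" "gi * g = 1\<^sub>m N"
    "g * s = t * g" "orth g" using conj_R[OF sR tR] by blast
  have dg: "det g = -1"
  proof -
    have "det g = 1 \<or> det g = -1" by (rule orth_det[OF g(6)])
    moreover have "det g \<noteq> 1"
    proof
      assume "det g = 1"
      hence gSO: "g \<in> SO_Q N A" by (rule orth_SO[OF g(6)])
      have "conj_class N A t = conj_class N A s" by (rule class_eq[OF gSO g(2,3,4) sc tc g(5)])
      with ne show False by simp
    qed
    ultimately show ?thesis by simp
  qed
  have dgi: "det gi = -1"
  proof -
    have "det g * det gi = 1" using det_mult[OF g(1,2)] g(3) by simp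
    hence "- det gi = 1" using dg by simp
    thus ?thesis by (metis minus_minus)
  qed
  obtain g2 g2i where g2: "g2 \<in> carrier_mat N N" "g2i \<in> carrier_mat N N" "g2 * g2i = 1\<^sub>m N" "g2i * g2 = 1\<^sub>m N"
    "g2 * s = (- s) * g2" "orth g2" "det g2 = (-1) ^ m" using sign_R[OF sR] by blast
  have dg2: "det g2 = -1" using g2(7) od by simp
  define g3 where "g3 = g2 * gi"
  define g3i where "g3i = g * g2i"
  have c3: "g3 \<in> carrier_mat N N" "g3i \<in> carrier_mat N N" unfolding g3_def g3i_def using g g2 by auto
  have "g3 * g3i = g2 * (gi * g) * g2i" unfolding g3_def g3i_def using g(1,2) g2(1,2) by (simp add: as)
  also have "\<dots> = 1\<^sub>m N" using g(4) g2(1,3) by simp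
  finally have i1: "g3 * g3i = 1\<^sub>m N" .
  have "g3i * g3 = g * (g2i * g2) * gi" unfolding g3_def g3i_def using g(1,2) g2(1,2) by (simp add: as)
  also have "\<dots> = 1\<^sub>m N" using g(1,3) g2(4) by simp
  finally have i2: "g3i * g3 = 1\<^sub>m N" .
  have gis: "gi * t = s * gi"
  proof -
    have "gi * t = gi * t * (g * gi)" using g(1,2,3) tc by simp
    also have "\<dots> = gi * (t * g) * gi" using g(1,2) tc by (simp add: as)
    also have "t * g = g * s" using g(5) by simp
    also have "gi * (g * s) * gi = (gi * g) * s * gi" using g(1,2) sc by (simp add: as)
    also have "\<dots> = s * gi" using g(1,2,4) sc by simp
    finally show ?thesis .
  qed
  have g3t: "g3 * t = (- s) * g3"
  proof -
    have "g3 * t = g2 * (gi * t)" unfolding g3_def using g(1,2) g2(1,2) tc by (simp add: as)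
    also have "\<dots> = (g2 * s) * gi" unfolding gis using g(1,2) g2(1,2) sc by (simp add: as)
    also have "g2 * s = (- s) * g2" by (rule g2(5))
    also have "(- s) * g2 * gi = (- s) * g3" unfolding g3_def using g(1,2) g2(1,2) sc
      by (intro assoc_mult_mat[of _ N N _ N _ N], auto)
    finally show ?thesis .
  qed
  have "det g3 = 1" unfolding g3_def using det_mult[OF g2(1) g(2)] dg2 dgi by simp
  moreover have "orth g3" unfolding g3_def by (rule orth_mult[OF g2(6) orth_inv[OF g(6) g(2,3)]])
  ultimately have g3SO: "g3 \<in> SO_Q N A" using orth_SO by blast
  have "conj_class N A (- s) = conj_class N A t"
    by (rule class_eq[OF g3SO c3(2) i1 i2 tc _ g3t], insert sc, simp)
  thus ?thesis using class_neg[OF sc] by simp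
qed

end

theorem mainTheorem16:
  fixes N :: nat and A :: "'k::alg_closed_field mat" and \<Delta> :: "'k poly"
    and C C' :: "'k mat set"
  assumes "odd CHAR('k)"
    and "even N" and "N \<ge> 2"
    and "nondegenerate_qf N A"
    and "\<Delta> \<in> frakA0 N"
    and "\<forall>l::'k. l \<noteq> 0 \<longrightarrow> mult_root \<Delta> (-l) = mult_root \<Delta> l"
    and "is_conj_class N A C" and "is_conj_class N A C'"
    and "C \<subseteq> R_Delta N A \<Delta>" and "C' \<subseteq> R_Delta N A \<Delta>"
    and "C \<noteq> C'"
  shows "(N mod 4 = 2 \<longrightarrow> C' = (\<lambda>c. - c) ` C) \<and>
         (N mod 4 = 0 \<longrightarrow> (\<lambda>c. - c) ` C = C \<and> (\<lambda>c. - c) ` C' = C')"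
proof -
  have two: "(2::'k) \<noteq> 0" by (rule two_ne_zero_char[OF assms(1)])
  obtain S :: "'k set" where S0: "\<forall>mu\<in>S. mu \<noteq> 0 \<and> mu \<noteq> 1 \<and> mu \<noteq> -1"
    and S1: "\<forall>mu. mu \<noteq> 0 \<and> mu \<noteq> 1 \<and> mu \<noteq> -1 \<longrightarrow> (mu \<in> S \<longleftrightarrow> inverse mu \<notin> S)"
    and S2: "\<forall>mu\<in>S. mu * mu \<noteq> -1 \<longrightarrow> -mu \<in> S"
    using S_exists[OF two] by blast
  obtain m where Nm: "N = 2 * m" using assms(2) by blast
  have fA: "degree \<Delta> = N" "mult_root \<Delta> 1 = 0" "mult_root \<Delta> (-1) = 0"
    using assms(5) unfolding frakA0_def by auto
  have A: "A \<in> carrier_mat N N" using assms(4) unfolding nondegenerate_qf_def by auto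
  interpret M: mctx2 N m A \<Delta> S
  proof (unfold_locales)
    show "(2::'k) \<noteq> 0" by (rule two)
    show "N = 2 * m" by (rule Nm)
    show "A \<in> carrier_mat N N" by (rule A)
    show "nondegenerate_qf N A" by (rule assms(4))
    show "degree \<Delta> = N" by (rule fA(1))
    show "2 \<le> N" by (rule assms(3))
    show "\<And>l. l \<noteq> 0 \<Longrightarrow> mult_root \<Delta> (- l) = mult_root \<Delta> l" using assms(6) by blast
    show "\<And>mu. mu \<in> S \<Longrightarrow> mu \<noteq> 0 \<and> mu \<noteq> 1 \<and> mu \<noteq> - 1" using S0 by blast
    show "\<And>mu. mu \<noteq> 0 \<Longrightarrow> mu \<noteq> 1 \<Longrightarrow> mu \<noteq> - 1 \<Longrightarrow> (mu \<in> S) = (inverse mu \<notin> S)" using S1 by blast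
    show "\<And>mu. mu \<in> S \<Longrightarrow> mu * mu \<noteq> - 1 \<Longrightarrow> - mu \<in> S" using S2 by blast
    show "mult_root \<Delta> 1 = 0" by (rule fA(2))
    show "mult_root \<Delta> (- 1) = 0" by (rule fA(3))
  qed
  obtain s where sSO: "s \<in> SO_Q N A" and Cs: "C = conj_class N A s"
    using assms(7) unfolding is_conj_class_def by blast
  obtain t where tSO: "t \<in> SO_Q N A" and Ct: "C' = conj_class N A t"
    using assms(8) unfolding is_conj_class_def by blast
  have sR: "s \<in> R_Delta N A \<Delta>" using M.self_in_class[OF M.SO_carrier[OF sSO]] Cs assms(9) by blast
  have tR: "t \<in> R_Delta N A \<Delta>" using M.self_in_class[OF M.SO_carrier[OF tSO]] Ct assms(10) by blast
  have ne: "conj_class N A s \<noteq> conj_class N A t" using assms(11) Cs Ct by simp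
  show ?thesis
  proof (intro conjI impI)
    assume "N mod 4 = 2"
    hence "odd m" using Nm by presburger
    thus "C' = (\<lambda>c. - c) ` C" unfolding Cs Ct by (rule M.neg_class_odd[OF sR tR _ ne])
  next
    assume "N mod 4 = 0"
    hence ev: "even m" using Nm by presburger
    show "(\<lambda>c. - c) ` C = C" unfolding Cs by (rule M.neg_class_even[OF sR ev])
    show "(\<lambda>c. - c) ` C' = C'" unfolding Ct by (rule M.neg_class_even[OF tR ev])
  qed
qed


end
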